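(* Let $N\ge1$. The composition of $\psi$ (restricted to $\bar\Gamma(2)_2=[\bar\Gamma(2),\bar\Gamma(2)]$) with reduction $\mathbb{Z}^3\to(\mathbb{Z}/N'\mathbb{Z})^3$ extends to a group homomorphism $\bar\psi:\Phi_N\to(\mathbb{Z}/N'\mathbb{Z})^3$ which vanishes on $A^N$ and $B^N$ and satisfies, for $\gamma\in\bar\Gamma(2)$ and $\delta\in\Phi_N$, $$\bar\psi(\gamma\delta\gamma^{-1})=(-\bar\phi_1(\gamma)\bar\phi_2(\delta),0)+\bar\psi(\delta).$$ In particular, for $i,j,k\in\mathbb{Z}$, $\bar\psi(A^iB^jC^kB^{-j}A^{-i})=(-ik,-jk,k)$.
   Context: Let $\bar\Gamma(2)=\Gamma(2)/\{\pm1\}\subset\mathrm{PSL}_2(\mathbb{Z})$, freely generated by the classes $A$ of $\begin{pmatrix}1&2\\0&1\end{pmatrix}$ and $B$ of $\begin{pmatrix}1&0\\2&1\end{pmatrix}$; $[g,h]=ghg^{-1}h^{-1}$, $C=[A,B]$; $\bar\Gamma(2)_1=\bar\Gamma(2)$, $\bar\Gamma(2)_{k+1}=[\bar\Gamma(2)_k,\bar\Gamma(2)]$. Let $\psi:\bar\Gamma(2)_2\to\mathbb{Z}^3$ be the homomorphism with kernel $\bar\Gamma(2)_4$ inducing the isomorphism $\bar\Gamma(2)_2/\bar\Gamma(2)_4\cong\mathbb{Z}^3$ that sends $C\mapsto(0,0,1)$, $[C,A]\mapsto(1,0,0)$, $[C,B]\mapsto(0,1,0)$. Set $N'=N$ if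 $N$ is odd and $N'=N/2$ if $N$ is even. $\Phi_N$ is the kernel of $\bar\phi_1:\bar\Gamma(2)\to(\mathbb{Z}/N\mathbb{Z})^2$, $A\mapsto(1,0)$, $B\mapsto(0,1)$. $\bar\phi_2:\Phi_N\to\mathbb{Z}/N'\mathbb{Z}$ is the homomorphism vanishing on $A^N$ and $B^N$ and taking the value $1$ on each $A^iB^jCB^{-j}A^{-i}$ ($i,j\in\mathbb{Z}$). The product $\bar\phi_1(\gamma)\bar\phi_2(\delta)$ is computed in $(\mathbb{Z}/N'\mathbb{Z})^2$ (using $N'\mid N$), and $(v,0)$ denotes the element of $(\mathbb{Z}/N'\mathbb{Z})^3$ with first two coordinates $v$ and last coordinate $0$. *)

theory Defs
  imports "HOL-Algebra.Algebra" "HOL-Library.Product_Plus"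
begin

text \<open>Integer 2x2 matrices (a,b,c,d) standing for [[a,b],[c,d]].\<close>
type_synonym mat2 = "int \<times> int \<times> int \<times> int"

fun mmul :: "mat2 \<Rightarrow> mat2 \<Rightarrow> mat2" where
  "mmul (a,b,c,d) (e,f,g,h) = (a*e+b*g, a*f+b*h, c*e+d*g, c*f+d*h)"

fun mneg :: "mat2 \<Rightarrow> mat2" where
  "mneg (a,b,c,d) = (-a,-b,-c,-d)"

definition Gamma2 :: "mat2 set" where
  "Gamma2 = {M. case M of (p,q,r,s) \<Rightarrow> p*s - q*r = 1 \<and> odd p \<and> even q \<and> even r \<and> odd s}"

definition pm :: "mat2 \<Rightarrow> mat2 set" where
  "pm M = {M, mneg M}"

text \<open>The group Gamma(2)/{+-1}, elements being the classes {M,-M}.\<close>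
definition Gbar :: "mat2 set monoid" where
  "Gbar = \<lparr> carrier = pm ` Gamma2,
            monoid.mult = (\<lambda>U V. {mmul P Q | P Q. P \<in> U \<and> Q \<in> V}),
            monoid.one = pm (1,0,0,1) \<rparr>"

definition gA :: "mat2 set" where "gA = pm (1,2,0,1)"
definition gB :: "mat2 set" where "gB = pm (1,0,2,1)"

definition gcomm :: "mat2 set \<Rightarrow> mat2 set \<Rightarrow> mat2 set" where
  "gcomm g h = g \<otimes>\<^bsub>Gbar\<^esub> h \<otimes>\<^bsub>Gbar\<^esub> inv\<^bsub>Gbar\<^esub> g \<otimes>\<^bsub>Gbar\<^esub> inv\<^bsub>Gbar\<^esub> h"

definition gC :: "mat2 set" where "gC = gcomm gA gB"

text \<open>Lower central series, 0-indexed auxiliary version: lcs0 k = Gbar_(k+1).\<close>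
primrec lcs0 :: "nat \<Rightarrow> mat2 set set" where
  "lcs0 0 = carrier Gbar"
| "lcs0 (Suc k) = generate Gbar {gcomm x y | x y. x \<in> lcs0 k \<and> y \<in> carrier Gbar}"

text \<open>Paper indexing: lcs 1 = Gbar, lcs (k+1) = [lcs k, Gbar].\<close>
definition lcs :: "nat \<Rightarrow> mat2 set set" where
  "lcs k = lcs0 (k - 1)"

text \<open>Componentwise congruence of integer vectors (elements of (Z/nZ)^2, (Z/nZ)^3).\<close>
definition modeq2 :: "int \<Rightarrow> int \<times> int \<Rightarrow> int \<times> int \<Rightarrow> bool" where
  "modeq2 n u v \<longleftrightarrow> fst u mod n = fst v mod n \<and> snd u mod n = snd v mod n"

definition modeq3 :: "int \<Rightarrow> int \<times> int \<times> int \<Rightarrow> int \<times> int \<times> int \<Rightarrow> bool" where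
  "modeq3 n u v \<longleftrightarrow> fst u mod n = fst v mod n \<and> fst (snd u) mod n = fst (snd v) mod n
                      \<and> snd (snd u) mod n = snd (snd v) mod n"

definition Nprime :: "nat \<Rightarrow> int" where
  "Nprime N = (if odd N then int N else int N div 2)"

end

theory Submission
  imports Defs
begin

lemma mmul_assoc: "mmul (mmul x y) z = mmul x (mmul y z)"
  by (cases x; cases y; cases z) (simp add: algebra_simps)

lemma mmul_neg1: "mmul (mneg x) y = mneg (mmul x y)"
  by (cases x; cases y) simp
lemma mmul_neg2: "mmul x (mneg y) = mneg (mmul x y)"
  by (cases x; cases y) simp
lemma mneg_mneg[simp]: "mneg (mneg x) = x"
  by (cases x) simp

lemma pm_mult: "pm P \<otimes>\<^bsub>Gbar\<^esub> pm Q = pm (mmul P Q)"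
proof -
  have "pm P \<otimes>\<^bsub>Gbar\<^esub> pm Q = {mmul P' Q' | P' Q'. P' \<in> {P, mneg P} \<and> Q' \<in> {Q, mneg Q}}"
    unfolding Gbar_def pm_def by simp
  also have "\<dots> = {mmul P Q, mneg (mmul P Q)}"
  proof (intro equalityI subsetI)
    fix x assume "x \<in> {mmul P' Q' | P' Q'. P' \<in> {P, mneg P} \<and> Q' \<in> {Q, mneg Q}}"
    then obtain P' Q' where "x = mmul P' Q'" "P' \<in> {P, mneg P}" "Q' \<in> {Q, mneg Q}" by blast
    then show "x \<in> {mmul P Q, mneg (mmul P Q)}"
      by (auto simp del: mmul.simps mneg.simps simp: mmul_neg1 mmul_neg2)
  next
    fix x assume "x \<in> {mmul P Q, mneg (mmul P Q)}"
    moreover have "mmul P Q \<in> {mmul P' Q' | P' Q'. P' \<in> {P, mneg P} \<and> Q' \<in> {Q, mneg Q}}" by blast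
    moreover have "mneg (mmul P Q) \<in> {mmul P' Q' | P' Q'. P' \<in> {P, mneg P} \<and> Q' \<in> {Q, mneg Q}}"
    proof -
      have "mmul (mneg P) Q \<in> {mmul P' Q' | P' Q'. P' \<in> {P, mneg P} \<and> Q' \<in> {Q, mneg Q}}" by blast
      thus ?thesis by (simp only: mmul_neg1)
    qed
    ultimately show "x \<in> {mmul P' Q' | P' Q'. P' \<in> {P, mneg P} \<and> Q' \<in> {Q, mneg Q}}"
      by blast
  qed
  finally show ?thesis unfolding pm_def .
qed

lemma Gamma2_mmul: "P \<in> Gamma2 \<Longrightarrow> Q \<in> Gamma2 \<Longrightarrow> mmul P Q \<in> Gamma2"
  unfolding Gamma2_def
  apply (cases P; cases Q)
  apply (auto simp: algebra_simps)
  done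

lemma carrier_Gbar: "carrier Gbar = pm ` Gamma2" by (simp add: Gbar_def)
lemma one_Gbar: "\<one>\<^bsub>Gbar\<^esub> = pm (1,0,0,1)" by (simp add: Gbar_def)

lemma mmul_one: "mmul (1,0,0,1) x = x" by (cases x) simp

lemma group_Gbar: "group Gbar"
proof (rule groupI)
  fix x y assume "x \<in> carrier Gbar" "y \<in> carrier Gbar"
  then show "x \<otimes>\<^bsub>Gbar\<^esub> y \<in> carrier Gbar"
    by (auto simp: carrier_Gbar pm_mult simp del: mmul.simps intro!: imageI Gamma2_mmul)
next
  show "\<one>\<^bsub>Gbar\<^esub> \<in> carrier Gbar" by (simp add: carrier_Gbar one_Gbar Gamma2_def)
next
  fix x y z assume "x \<in> carrier Gbar" "y \<in> carrier Gbar" "z \<in> carrier Gbar"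
  then show "x \<otimes>\<^bsub>Gbar\<^esub> y \<otimes>\<^bsub>Gbar\<^esub> z = x \<otimes>\<^bsub>Gbar\<^esub> (y \<otimes>\<^bsub>Gbar\<^esub> z)"
    by (auto simp: carrier_Gbar pm_mult mmul_assoc simp del: mmul.simps)
next
  fix x assume "x \<in> carrier Gbar"
  then show "\<one>\<^bsub>Gbar\<^esub> \<otimes>\<^bsub>Gbar\<^esub> x = x"
    by (auto simp: carrier_Gbar one_Gbar pm_mult mmul_one simp del: mmul.simps)
next
  fix x assume "x \<in> carrier Gbar"
  then obtain p q r s where x: "x = pm (p,q,r,s)" "(p,q,r,s) \<in> Gamma2"
    by (auto simp: carrier_Gbar)
  have "(s,-q,-r,p) \<in> Gamma2" using x(2) by (auto simp: Gamma2_def algebra_simps)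
  moreover have "pm (s,-q,-r,p) \<otimes>\<^bsub>Gbar\<^esub> x = \<one>\<^bsub>Gbar\<^esub>"
    using x(2) by (simp add: x(1) pm_mult one_Gbar Gamma2_def algebra_simps)
  ultimately show "\<exists>y\<in>carrier Gbar. y \<otimes>\<^bsub>Gbar\<^esub> x = \<one>\<^bsub>Gbar\<^esub>"
    by (auto simp: carrier_Gbar)
qed

interpretation GB: group Gbar by (rule group_Gbar)

lemma gA_carrier: "gA \<in> carrier Gbar"
  by (auto simp: gA_def carrier_Gbar Gamma2_def)
lemma gB_carrier: "gB \<in> carrier Gbar"
  by (auto simp: gB_def carrier_Gbar Gamma2_def)

lemma gA_nat_pow: "gA [^]\<^bsub>Gbar\<^esub> (n::nat) = pm (1, 2 * int n, 0, 1)"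
  by (induction n) (auto simp: gA_def one_Gbar pm_mult algebra_simps)
lemma gB_nat_pow: "gB [^]\<^bsub>Gbar\<^esub> (n::nat) = pm (1, 0, 2 * int n, 1)"
  by (induction n) (auto simp: gB_def one_Gbar pm_mult algebra_simps)

lemma inv_pm: "(p,q,r,s) \<in> Gamma2 \<Longrightarrow> inv\<^bsub>Gbar\<^esub> (pm (p,q,r,s)) = pm (s,-q,-r,p)"
  apply (rule GB.inv_equality)
  apply (auto simp: pm_mult one_Gbar Gamma2_def algebra_simps carrier_Gbar)
  done

lemma gA_int_pow: "gA [^]\<^bsub>Gbar\<^esub> (k::int) = pm (1, 2 * k, 0, 1)"
proof (cases "k < 0")
  case True
  then have "gA [^]\<^bsub>Gbar\<^esub> k = inv\<^bsub>Gbar\<^esub> (pm (1, 2 * int (nat (-k)), 0, 1))"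
    by (simp add: int_pow_def2 gA_nat_pow)
  also have "\<dots> = pm (1, 2 * k, 0, 1)" using True by (subst inv_pm) (auto simp: Gamma2_def)
  finally show ?thesis .
qed (simp add: int_pow_def2 gA_nat_pow)

lemma gB_int_pow: "gB [^]\<^bsub>Gbar\<^esub> (k::int) = pm (1, 0, 2 * k, 1)"
proof (cases "k < 0")
  case True
  then have "gB [^]\<^bsub>Gbar\<^esub> k = inv\<^bsub>Gbar\<^esub> (pm (1, 0, 2 * int (nat (-k)), 1))"
    by (simp add: int_pow_def2 gB_nat_pow)
  also have "\<dots> = pm (1, 0, 2 * k, 1)" using True by (subst inv_pm) (auto simp: Gamma2_def)
  finally show ?thesis .
qed (simp add: int_pow_def2 gB_nat_pow)

lemma pm_neg: "pm (mneg M) = pm M" by (auto simp: pm_def)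

lemma gen_aux:
  assumes H: "subgroup H Gbar" "gA \<in> H" "gB \<in> H"
  shows "(p,q,r,s) \<in> Gamma2 \<Longrightarrow> pm (p,q,r,s) \<in> H"
proof (induction "nat (\<bar>p\<bar> + \<bar>r\<bar>)" arbitrary: p q r s rule: less_induct)
  case less
  have M: "p*s - q*r = 1" "odd p" "even q" "even r" "odd s" using less.prems by (auto simp: Gamma2_def)
  have powA: "gA [^]\<^bsub>Gbar\<^esub> (k::int) \<in> H" for k using GB.subgroup_int_pow_closed[OF H(1) H(2)] .
  have powB: "gB [^]\<^bsub>Gbar\<^esub> (k::int) \<in> H" for k using GB.subgroup_int_pow_closed[OF H(1) H(3)] .
  show ?case
  proof (cases "r = 0")
    case True
    then have "p * s = 1" using M by simp
    then have "(p = 1 \<and> s = 1) \<or> (p = -1 \<and> s = -1)" using zmult_eq_1_iff by blast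
    then show ?thesis
    proof
      assume "p = 1 \<and> s = 1"
      then have "pm (p,q,r,s) = gA [^]\<^bsub>Gbar\<^esub> (q div 2)" using True M by (simp add: gA_int_pow)
      then show ?thesis using powA by simp
    next
      assume "p = -1 \<and> s = -1"
      then have "pm (p,q,r,s) = pm (mneg (1,-q,0,1))" using True by simp
      also have "\<dots> = gA [^]\<^bsub>Gbar\<^esub> (-q div 2)" using M by (simp only: pm_neg gA_int_pow) simp
      finally show ?thesis using powA by simp
    qed
  next
    case False
    have pr: "\<bar>p\<bar> \<noteq> \<bar>r\<bar>" using M by (metis abs_eq_iff even_minus)
    have "p \<noteq> 0" using M by auto
    show ?thesis
    proof (cases "\<bar>p\<bar> > \<bar>r\<bar>")
      case True
      define e :: int where "e = (if (p > 0) = (r > 0) then 1 else -1)"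
      have e2: "e * e = 1" by (simp add: e_def)
      have lt: "\<bar>p - 2*e*r\<bar> < \<bar>p\<bar>" using True False unfolding e_def by auto
      have "(p - 2*e*r, q - 2*e*s, r, s) \<in> Gamma2" using M
        by (auto simp: Gamma2_def algebra_simps)
      then have IH: "pm (p - 2*e*r, q - 2*e*s, r, s) \<in> H"
        using less.hyps[of "p - 2*e*r" r] lt by (auto)
      have "pm (p,q,r,s) = gA [^]\<^bsub>Gbar\<^esub> e \<otimes>\<^bsub>Gbar\<^esub> pm (p - 2*e*r, q - 2*e*s, r, s)"
        by (simp add: gA_int_pow pm_mult algebra_simps)
      then show ?thesis using IH powA H(1) subgroup.m_closed by metis
    next
      case False2: False
      then have True: "\<bar>r\<bar> > \<bar>p\<bar>" using pr by simp
      define e :: int where "e = (if (p > 0) = (r > 0) then 1 else -1)"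
      have lt: "\<bar>r - 2*e*p\<bar> < \<bar>r\<bar>" using True \<open>p \<noteq> 0\<close> unfolding e_def by auto
      have "(p, q, r - 2*e*p, s - 2*e*q) \<in> Gamma2" using M
        by (auto simp: Gamma2_def algebra_simps)
      then have IH: "pm (p, q, r - 2*e*p, s - 2*e*q) \<in> H"
        using less.hyps[of p "r - 2*e*p"] lt by (auto)
      have "pm (p,q,r,s) = gB [^]\<^bsub>Gbar\<^esub> e \<otimes>\<^bsub>Gbar\<^esub> pm (p, q, r - 2*e*p, s - 2*e*q)"
        by (simp add: gB_int_pow pm_mult algebra_simps)
      then show ?thesis using IH powB H(1) subgroup.m_closed by metis
    qed
  qed
qed

lemma gen_Gbar:
  assumes "subgroup H Gbar" "gA \<in> H" "gB \<in> H"
  shows "carrier Gbar \<subseteq> H"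
  using gen_aux[OF assms] by (auto simp: carrier_Gbar)

abbreviation gm (infixl "\<star>" 70) where "x \<star> y \<equiv> x \<otimes>\<^bsub>Gbar\<^esub> y"
abbreviation gi where "gi x \<equiv> inv\<^bsub>Gbar\<^esub> x"
abbreviation G where "G \<equiv> carrier Gbar"

lemma canc1: "x \<in> G \<Longrightarrow> y \<in> G \<Longrightarrow> x \<star> (gi x \<star> y) = y"
  by (simp add: GB.m_assoc[symmetric])
lemma canc2: "x \<in> G \<Longrightarrow> y \<in> G \<Longrightarrow> gi x \<star> (x \<star> y) = y"
  by (simp add: GB.m_assoc[symmetric])

lemmas gs = GB.m_assoc GB.inv_mult_group canc1 canc2 GB.inv_inv

lemma gcomm_carrier[simp]: "x \<in> G \<Longrightarrow> y \<in> G \<Longrightarrow> gcomm x y \<in> G"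
  by (simp add: gcomm_def)

lemma I1: "x \<in> G \<Longrightarrow> y \<in> G \<Longrightarrow> z \<in> G \<Longrightarrow>
  gcomm x (y \<star> z) = gcomm x y \<star> (y \<star> gcomm x z \<star> gi y)"
  by (simp add: gcomm_def gs)
lemma I2: "x \<in> G \<Longrightarrow> y \<in> G \<Longrightarrow> z \<in> G \<Longrightarrow>
  gcomm (x \<star> y) z = (x \<star> gcomm y z \<star> gi x) \<star> gcomm x z"
  by (simp add: gcomm_def gs)
lemma I3: "x \<in> G \<Longrightarrow> y \<in> G \<Longrightarrow> gcomm y x = gi (gcomm x y)"
  by (simp add: gcomm_def gs)
lemma I4: "x \<in> G \<Longrightarrow> c \<in> G \<Longrightarrow> x \<star> c \<star> gi x = gcomm x c \<star> c"
  by (simp add: gcomm_def gs)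
lemma I5: "x \<in> G \<Longrightarrow> y \<in> G \<Longrightarrow> gcomm x (gi y) = gi y \<star> gi (gcomm x y) \<star> y"
  by (simp add: gcomm_def gs)
lemma I6: "x \<in> G \<Longrightarrow> y \<in> G \<Longrightarrow> gcomm (gi x) y = gi x \<star> gi (gcomm x y) \<star> x"
  by (simp add: gcomm_def gs)
lemma gcomm_conj: "g \<in> G \<Longrightarrow> x \<in> G \<Longrightarrow> y \<in> G \<Longrightarrow>
  g \<star> gcomm x y \<star> gi g = gcomm (g \<star> x \<star> gi g) (g \<star> y \<star> gi g)"
  by (simp add: gcomm_def gs)

lemma lcs0_sub_normal: "lcs0 k \<lhd> Gbar"
proof (induction k)
  case 0 then show ?case by (simp add: GB.normal_self)
next
  case (Suc k)
  interpret N: normal "lcs0 k" Gbar by (rule Suc)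
  show ?case unfolding lcs0.simps
  proof (rule GB.normal_generateI)
    show "{gcomm x y |x y. x \<in> lcs0 k \<and> y \<in> G} \<subseteq> G" using N.subset by auto
  next
    fix h g assume "h \<in> {gcomm x y |x y. x \<in> lcs0 k \<and> y \<in> G}" "g \<in> G"
    then obtain x y where h: "h = gcomm x y" "x \<in> lcs0 k" "y \<in> G" by blast
    have "x \<in> G" using h N.subset by auto
    then have "g \<star> h \<star> gi g = gcomm (g \<star> x \<star> gi g) (g \<star> y \<star> gi g)"
      using h(1,3) \<open>g \<in> G\<close> gcomm_conj by presburger
    moreover have "g \<star> x \<star> gi g \<in> lcs0 k" using N.inv_op_closed2 \<open>g \<in> G\<close> h by simp
    moreover have "g \<star> y \<star> gi g \<in> G" using h \<open>g \<in> G\<close> by simp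
    ultimately show "g \<star> h \<star> gi g \<in> {gcomm x y |x y. x \<in> lcs0 k \<and> y \<in> G}"
      by blast
  qed
qed

lemma lcs0_subgroup: "subgroup (lcs0 k) Gbar"
  by (rule normal_imp_subgroup[OF lcs0_sub_normal])

lemma lcs0_sub: "lcs0 k \<subseteq> G"
  by (rule subgroup.subset[OF lcs0_subgroup])

lemma lcs0_comm1: assumes "x \<in> lcs0 k" "y \<in> G" shows "gcomm x y \<in> lcs0 (Suc k)"
proof -
  have "gcomm x y \<in> {gcomm x y |x y. x \<in> lcs0 k \<and> y \<in> G}" using assms by blast
  then show ?thesis unfolding lcs0.simps by (rule generate.incl)
qed

lemma lcs0_comm2: "x \<in> lcs0 k \<Longrightarrow> y \<in> G \<Longrightarrow> gcomm y x \<in> lcs0 (Suc k)"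
proof -
  assume a: "x \<in> lcs0 k" "y \<in> G"
  then have "x \<in> G" using lcs0_sub by blast
  then have "gcomm y x = gi (gcomm x y)" using I3 a by blast
  then show ?thesis using lcs0_comm1[OF a] subgroup.m_inv_closed[OF lcs0_subgroup] by metis
qed

lemma lcs0_mono: "lcs0 (Suc k) \<subseteq> lcs0 k"
proof -
  interpret N: normal "lcs0 k" Gbar by (rule lcs0_sub_normal)
  have "{gcomm x y |x y. x \<in> lcs0 k \<and> y \<in> G} \<subseteq> lcs0 k"
  proof safe
    fix x y assume a: "x \<in> lcs0 k" "y \<in> G"
    then have x: "x \<in> G" using lcs0_sub by blast
    have "gcomm x y = x \<star> (y \<star> gi x \<star> gi y)" using x a by (simp add: gcomm_def gs)
    moreover have "y \<star> gi x \<star> gi y \<in> lcs0 k" using N.inv_op_closed2 a N.m_inv_closed by blast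
    ultimately show "gcomm x y \<in> lcs0 k" using a N.m_closed by metis
  qed
  then show ?thesis unfolding lcs0.simps
    by (rule GB.generate_subgroup_incl[OF _ lcs0_subgroup])
qed

lemma comm_L2: "x \<in> G \<Longrightarrow> y \<in> G \<Longrightarrow> gcomm x y \<in> lcs 2"
  using lcs0_comm1[of x 0 y] by (simp add: lcs_def)

lemma lcs2_derived: "lcs 2 = derived Gbar G"
proof -
  have "{gcomm x y |x y. x \<in> G \<and> y \<in> G} = derived_set Gbar G"
    by (auto simp: gcomm_def)
  then show ?thesis by (simp add: lcs_def derived_def)
qed

lemma decomp:
  assumes g: "g \<in> G"
  shows "\<exists>i j k. k \<in> lcs 2 \<and> g = gA [^]\<^bsub>Gbar\<^esub> (i::int) \<star> gB [^]\<^bsub>Gbar\<^esub> (j::int) \<star> k"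
proof -
  define L where "L = lcs 2"
  interpret N: normal L Gbar unfolding L_def lcs_def using lcs0_sub_normal[of 1] by simp
  define Q where "Q = Gbar Mod L"
  interpret Q: comm_group Q unfolding Q_def L_def lcs2_derived by (rule GB.derived_quot_is_comm_group)
  define \<pi> where "\<pi> = (\<lambda>a. L #>\<^bsub>Gbar\<^esub> a)"
  interpret h: group_hom Gbar Q \<pi>
    unfolding group_hom_def group_hom_axioms_def Q_def \<pi>_def
    using GB.group_axioms Q.group_axioms N.r_coset_hom_Mod Q_def by blast
  define a where "a = \<pi> gA"
  define b where "b = \<pi> gB"
  have ab: "a \<in> carrier Q" "b \<in> carrier Q" using gA_carrier gB_carrier a_def b_def by auto
  have pe: "\<pi> (gA [^]\<^bsub>Gbar\<^esub> (i::int) \<star> gB [^]\<^bsub>Gbar\<^esub> (j::int)) = a [^]\<^bsub>Q\<^esub> i \<otimes>\<^bsub>Q\<^esub> b [^]\<^bsub>Q\<^esub> j" for i j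
    using gA_carrier gB_carrier by (simp add: h.hom_int_pow a_def b_def)
  define D where "D = {g \<in> G. \<exists>i j. \<pi> g = a [^]\<^bsub>Q\<^esub> (i::int) \<otimes>\<^bsub>Q\<^esub> b [^]\<^bsub>Q\<^esub> (j::int)}"
  have "subgroup D Gbar"
  proof (rule GB.subgroupI)
    show "D \<subseteq> G" unfolding D_def by auto
    have "\<pi> \<one>\<^bsub>Gbar\<^esub> = a [^]\<^bsub>Q\<^esub> (0::int) \<otimes>\<^bsub>Q\<^esub> b [^]\<^bsub>Q\<^esub> (0::int)" by simp
    then show "D \<noteq> {}" unfolding D_def by blast
  next
    fix x assume "x \<in> D"
    then obtain i j where x: "x \<in> G" "\<pi> x = a [^]\<^bsub>Q\<^esub> (i::int) \<otimes>\<^bsub>Q\<^esub> b [^]\<^bsub>Q\<^esub> (j::int)"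
      unfolding D_def by blast
    have "\<pi> (gi x) = inv\<^bsub>Q\<^esub> (\<pi> x)" using x by simp
    also have "\<dots> = a [^]\<^bsub>Q\<^esub> (-i) \<otimes>\<^bsub>Q\<^esub> b [^]\<^bsub>Q\<^esub> (-j)"
      using ab by (simp add: x Q.inv_mult Q.int_pow_neg Q.m_comm)
    finally show "gi x \<in> D" unfolding D_def using x by blast
  next
    fix x y assume "x \<in> D" "y \<in> D"
    then obtain i j i' j' where x: "x \<in> G" "\<pi> x = a [^]\<^bsub>Q\<^esub> (i::int) \<otimes>\<^bsub>Q\<^esub> b [^]\<^bsub>Q\<^esub> (j::int)"
      and y: "y \<in> G" "\<pi> y = a [^]\<^bsub>Q\<^esub> (i'::int) \<otimes>\<^bsub>Q\<^esub> b [^]\<^bsub>Q\<^esub> (j'::int)"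
      unfolding D_def by blast
    have "\<pi> (x \<star> y) = \<pi> x \<otimes>\<^bsub>Q\<^esub> \<pi> y" using x y by simp
    also have "\<dots> = a [^]\<^bsub>Q\<^esub> (i+i') \<otimes>\<^bsub>Q\<^esub> b [^]\<^bsub>Q\<^esub> (j+j')"
      using ab by (simp add: x y Q.int_pow_mult Q.m_ac)
    finally show "x \<star> y \<in> D" unfolding D_def using x y by blast
  qed
  moreover have "gA \<in> D"
  proof -
    have "\<pi> gA = a [^]\<^bsub>Q\<^esub> (1::int) \<otimes>\<^bsub>Q\<^esub> b [^]\<^bsub>Q\<^esub> (0::int)" using ab by (simp add: a_def)
    then show ?thesis unfolding D_def using gA_carrier by blast
  qed
  moreover have "gB \<in> D"
  proof -
    have "\<pi> gB = a [^]\<^bsub>Q\<^esub> (0::int) \<otimes>\<^bsub>Q\<^esub> b [^]\<^bsub>Q\<^esub> (1::int)" using ab by (simp add: b_def)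
    then show ?thesis unfolding D_def using gB_carrier by blast
  qed
  ultimately have "g \<in> D" using gen_Gbar g by blast
  then obtain i j where ij: "\<pi> g = \<pi> (gA [^]\<^bsub>Gbar\<^esub> (i::int) \<star> gB [^]\<^bsub>Gbar\<^esub> (j::int))"
    unfolding D_def pe by blast
  define h where "h = gA [^]\<^bsub>Gbar\<^esub> (i::int) \<star> gB [^]\<^bsub>Gbar\<^esub> (j::int)"
  have hc: "h \<in> G" unfolding h_def using gA_carrier gB_carrier by simp
  have "g \<in> L #>\<^bsub>Gbar\<^esub> h" using ij GB.rcos_self[OF g N.subgroup_axioms] unfolding \<pi>_def h_def by simp
  then have "g \<star> gi h \<in> L" using N.rcos_module_imp[OF GB.group_axioms hc] by simp
  then have k: "gi h \<star> (g \<star> gi h) \<star> h \<in> L" using N.inv_op_closed1 hc by simp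
  have "g = h \<star> (gi h \<star> (g \<star> gi h) \<star> h)" using g hc by (simp add: gs)
  then show ?thesis using k unfolding L_def h_def by blast
qed

abbreviation p1 :: "int \<times> int \<times> int \<Rightarrow> int" where "p1 v \<equiv> fst v"
abbreviation p2 :: "int \<times> int \<times> int \<Rightarrow> int" where "p2 v \<equiv> fst (snd v)"
abbreviation p3 :: "int \<times> int \<times> int \<Rightarrow> int" where "p3 v \<equiv> snd (snd v)"

definition sc :: "int \<Rightarrow> int \<times> int \<times> int \<Rightarrow> int \<times> int \<times> int" where
  "sc k v = (k * p1 v, k * p2 v, k * p3 v)"

lemma sc_simps[simp]: "p1 (sc k v) = k * p1 v" "p2 (sc k v) = k * p2 v" "p3 (sc k v) = k * p3 v"
  by (simp_all add: sc_def)

lemma vec_eqI: "p1 u = p1 v \<Longrightarrow> p2 u = p2 v \<Longrightarrow> p3 u = p3 v \<Longrightarrow> u = (v::int\<times>int\<times>int)"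
  by (simp add: prod_eq_iff)

lemma sub_nat_pow: "subgroup H Gbar \<Longrightarrow> x \<in> H \<Longrightarrow> x [^]\<^bsub>Gbar\<^esub> (n::nat) \<in> H"
  using GB.subgroup_int_pow_closed[of H x "int n"] by (simp add: int_pow_int)

lemma pow_additive:
  assumes H: "subgroup H Gbar" and add: "\<And>x y. x \<in> H \<Longrightarrow> y \<in> H \<Longrightarrow> \<kappa> (x \<star> y) = \<kappa> x + \<kappa> y"
    and x: "x \<in> H"
  shows "\<kappa> (x [^]\<^bsub>Gbar\<^esub> (i::int)) = sc i (\<kappa> x)"
proof -
  have xG: "x \<in> G" using x H subgroup.subset by blast
  have one: "\<kappa> \<one>\<^bsub>Gbar\<^esub> = 0"
    using add[of "\<one>\<^bsub>Gbar\<^esub>" "\<one>\<^bsub>Gbar\<^esub>"] subgroup.one_closed[OF H] by simp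
  have nat: "\<kappa> (x [^]\<^bsub>Gbar\<^esub> (n::nat)) = sc (int n) (\<kappa> x)" for n
  proof (induction n)
    case 0 then show ?case using one by (simp add: sc_def zero_prod_def)
  next
    case (Suc n)
    have "x [^]\<^bsub>Gbar\<^esub> (Suc n) = x [^]\<^bsub>Gbar\<^esub> n \<star> x" by simp
    moreover have "x [^]\<^bsub>Gbar\<^esub> n \<in> H" using sub_nat_pow[OF H x] .
    ultimately show ?case using add x Suc by (simp add: sc_def algebra_simps prod_eq_iff)
  qed
  have inv: "\<kappa> (gi y) = - \<kappa> y" if "y \<in> H" for y
  proof -
    have "gi y \<in> H" using subgroup.m_inv_closed[OF H that] .
    then have "\<kappa> (y \<star> gi y) = \<kappa> y + \<kappa> (gi y)" using add that by blast
    moreover have "y \<star> gi y = \<one>\<^bsub>Gbar\<^esub>" using that H subgroup.subset GB.r_inv by blast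
    ultimately have "\<kappa> y + \<kappa> (gi y) = 0" using one by simp
    then show ?thesis by (simp add: minus_unique)
  qed
  show ?thesis
  proof (cases "i < 0")
    case True
    then have "x [^]\<^bsub>Gbar\<^esub> i = x [^]\<^bsub>Gbar\<^esub> (- int (nat (-i)))" by simp
    also have "\<dots> = gi (x [^]\<^bsub>Gbar\<^esub> (nat (-i)))" by (rule GB.int_pow_neg_int[OF xG])
    finally have "x [^]\<^bsub>Gbar\<^esub> i = gi (x [^]\<^bsub>Gbar\<^esub> (nat (-i)))" .
    then have "\<kappa> (x [^]\<^bsub>Gbar\<^esub> i) = - sc (int (nat (-i))) (\<kappa> x)"
      using inv[OF sub_nat_pow[OF H x], of "nat (-i)"] nat[of "nat (-i)"] by (simp only:)
    then show ?thesis using True by (simp add: sc_def)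
  next
    case False
    then have "x [^]\<^bsub>Gbar\<^esub> i = x [^]\<^bsub>Gbar\<^esub> (int (nat i))" by simp
    then have "x [^]\<^bsub>Gbar\<^esub> i = x [^]\<^bsub>Gbar\<^esub> (nat i)" by (simp only: int_pow_int)
    then have "\<kappa> (x [^]\<^bsub>Gbar\<^esub> i) = sc (int (nat i)) (\<kappa> x)" using nat[of "nat i"] by (simp only:)
    then show ?thesis using False by simp
  qed
qed


locale P7 =
  fixes N :: nat
    and \<psi> :: "mat2 set \<Rightarrow> int \<times> int \<times> int"
    and \<phi>1 :: "mat2 set \<Rightarrow> int \<times> int"
    and \<phi>2 :: "mat2 set \<Rightarrow> int"
  assumes N: "N \<ge> 1"
    and psi_hom: "\<forall>x\<in>lcs 2. \<forall>y\<in>lcs 2. \<psi> (x \<otimes>\<^bsub>Gbar\<^esub> y) = \<psi> x + \<psi> y"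
    and psi_ker: "{x \<in> lcs 2. \<psi> x = 0} = lcs 4"
    and psi_C: "\<psi> gC = (0,0,1)"
    and psi_CA: "\<psi> (gcomm gC gA) = (1,0,0)"
    and psi_CB: "\<psi> (gcomm gC gB) = (0,1,0)"
    and phi1_hom: "\<forall>x\<in>carrier Gbar. \<forall>y\<in>carrier Gbar.
                     modeq2 (int N) (\<phi>1 (x \<otimes>\<^bsub>Gbar\<^esub> y)) (\<phi>1 x + \<phi>1 y)"
    and phi1_A: "modeq2 (int N) (\<phi>1 gA) (1,0)"
    and phi1_B: "modeq2 (int N) (\<phi>1 gB) (0,1)"
    and phi2_hom: "\<forall>x\<in>{x \<in> carrier Gbar. modeq2 (int N) (\<phi>1 x) (0,0)}. \<forall>y\<in>{x \<in> carrier Gbar. modeq2 (int N) (\<phi>1 x) (0,0)}.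
        (\<phi>2 (x \<otimes>\<^bsub>Gbar\<^esub> y)) mod (Nprime N) = (\<phi>2 x + \<phi>2 y) mod (Nprime N)"
    and phi2_AN: "\<phi>2 (gA [^]\<^bsub>Gbar\<^esub> N) mod (Nprime N) = 0"
    and phi2_BN: "\<phi>2 (gB [^]\<^bsub>Gbar\<^esub> N) mod (Nprime N) = 0"
    and phi2_C: "\<forall>(i::int) (j::int). \<phi>2 (gA [^]\<^bsub>Gbar\<^esub> i \<otimes>\<^bsub>Gbar\<^esub> gB [^]\<^bsub>Gbar\<^esub> j \<otimes>\<^bsub>Gbar\<^esub> gC
                    \<otimes>\<^bsub>Gbar\<^esub> gB [^]\<^bsub>Gbar\<^esub> (-j) \<otimes>\<^bsub>Gbar\<^esub> gA [^]\<^bsub>Gbar\<^esub> (-i)) mod (Nprime N) = 1 mod (Nprime N)"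
begin

abbreviation "L2 \<equiv> lcs0 1"
abbreviation "L3 \<equiv> lcs0 2"
abbreviation "L4 \<equiv> lcs0 3"

lemma lcs_simps: "lcs 2 = L2" "lcs 4 = L4" by (simp_all add: lcs_def)

lemma L2G: "x \<in> L2 \<Longrightarrow> x \<in> G" using lcs0_sub by blast
lemma sucs: "Suc 0 = (1::nat)" "Suc 1 = (2::nat)" "Suc 2 = (3::nat)" "Suc 3 = (4::nat)" by simp_all
lemma L3L2: "x \<in> L3 \<Longrightarrow> x \<in> L2" using lcs0_mono[of 1, unfolded sucs] by blast
lemma L4L3: "x \<in> L4 \<Longrightarrow> x \<in> L3" using lcs0_mono[of 2, unfolded sucs] by blast
lemma L5L4: "x \<in> lcs0 4 \<Longrightarrow> x \<in> L4" using lcs0_mono[of 3, unfolded sucs] by blast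
lemma L3G: "x \<in> L3 \<Longrightarrow> x \<in> G" using L3L2 L2G by blast

lemma L2sub: "subgroup L2 Gbar" by (rule lcs0_subgroup)
lemma L3sub: "subgroup L3 Gbar" by (rule lcs0_subgroup)
lemma L2normal: "L2 \<lhd> Gbar" by (rule lcs0_sub_normal)
lemma L3normal: "L3 \<lhd> Gbar" by (rule lcs0_sub_normal)

lemma L2_mult: "x \<in> L2 \<Longrightarrow> y \<in> L2 \<Longrightarrow> x \<star> y \<in> L2" using subgroup.m_closed[OF L2sub] .
lemma L2_inv: "x \<in> L2 \<Longrightarrow> gi x \<in> L2" using subgroup.m_inv_closed[OF L2sub] .
lemma L2_one: "\<one>\<^bsub>Gbar\<^esub> \<in> L2" using subgroup.one_closed[OF L2sub] .
lemma L2_conj: "g \<in> G \<Longrightarrow> x \<in> L2 \<Longrightarrow> g \<star> x \<star> gi g \<in> L2" using normal.inv_op_closed2[OF L2normal] .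
lemma L3_conj: "g \<in> G \<Longrightarrow> x \<in> L3 \<Longrightarrow> g \<star> x \<star> gi g \<in> L3" using normal.inv_op_closed2[OF L3normal] .

lemma comm12: "x \<in> G \<Longrightarrow> y \<in> G \<Longrightarrow> gcomm x y \<in> L2" using lcs0_comm1[of x 0 y, unfolded sucs] by simp
lemma comm23: "x \<in> L2 \<Longrightarrow> y \<in> G \<Longrightarrow> gcomm x y \<in> L3" using lcs0_comm1[of x 1 y, unfolded sucs] .
lemma comm23': "x \<in> L2 \<Longrightarrow> y \<in> G \<Longrightarrow> gcomm y x \<in> L3" using lcs0_comm2[of x 1 y, unfolded sucs] .
lemma comm34: "x \<in> L3 \<Longrightarrow> y \<in> G \<Longrightarrow> gcomm x y \<in> L4" using lcs0_comm1[of x 2 y, unfolded sucs] .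
lemma comm34': "x \<in> L3 \<Longrightarrow> y \<in> G \<Longrightarrow> gcomm y x \<in> L4" using lcs0_comm2[of x 2 y, unfolded sucs] .
lemma comm45: "x \<in> L4 \<Longrightarrow> y \<in> G \<Longrightarrow> gcomm x y \<in> L4" using lcs0_comm1[of x 3 y, unfolded sucs] L5L4 by blast

lemma gC_L2: "gC \<in> L2" unfolding gC_def using comm12 gA_carrier gB_carrier by blast
lemma gC_G: "gC \<in> G" using gC_L2 L2G by blast

lemma psi_mult: "x \<in> L2 \<Longrightarrow> y \<in> L2 \<Longrightarrow> \<psi> (x \<star> y) = \<psi> x + \<psi> y"
  using psi_hom unfolding lcs_simps by blast
lemma psi_L4: assumes "x \<in> L4" shows "\<psi> x = 0"
proof -
  have "x \<in> {x \<in> L2. \<psi> x = 0}" unfolding psi_ker[unfolded lcs_simps] using assms .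
  then show ?thesis by (simp only: mem_Collect_eq)
qed
lemma psi_zero: assumes "x \<in> L2" "\<psi> x = 0" shows "x \<in> L4"
proof -
  have "x \<in> {x \<in> L2. \<psi> x = 0}" using assms by (intro CollectI conjI)
  then show ?thesis unfolding psi_ker[unfolded lcs_simps] .
qed
lemma psi_one: "\<psi> \<one>\<^bsub>Gbar\<^esub> = 0"
  using psi_mult[OF L2_one L2_one] by simp
lemma psi_inv: "x \<in> L2 \<Longrightarrow> \<psi> (gi x) = - \<psi> x"
proof -
  assume x: "x \<in> L2"
  have "\<psi> (x \<star> gi x) = \<psi> x + \<psi> (gi x)" using psi_mult[OF x L2_inv[OF x]] .
  moreover have "x \<star> gi x = \<one>\<^bsub>Gbar\<^esub>" using GB.r_inv[OF L2G[OF x]] .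
  ultimately have "\<psi> x + \<psi> (gi x) = 0" using psi_one by simp
  then show ?thesis by (simp add: minus_unique)
qed
lemma psi_pow: "x \<in> L2 \<Longrightarrow> \<psi> (x [^]\<^bsub>Gbar\<^esub> (i::int)) = sc i (\<psi> x)"
  by (rule pow_additive[OF L2sub psi_mult])

lemma conj_L3: assumes g: "g \<in> G" and c: "c \<in> L3" shows "\<psi> (g \<star> c \<star> gi g) = \<psi> c"
proof -
  have cG: "c \<in> G" using L3G[OF c] .
  have e: "g \<star> c \<star> gi g = gcomm g c \<star> c" using I4[OF g cG] .
  have m: "gcomm g c \<in> L4" using comm34'[OF c g] .
  have "\<psi> (gcomm g c \<star> c) = \<psi> (gcomm g c) + \<psi> c" using psi_mult[OF L3L2[OF L4L3[OF m]] L3L2[OF c]] .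
  then show ?thesis using e psi_L4[OF m] by simp
qed

definition F :: "mat2 set \<Rightarrow> int \<times> int \<times> int" where "F y = \<psi> (gcomm gC y)"

lemma comm_psi:
  assumes c: "c \<in> L2" and y: "y \<in> G"
  shows "\<psi> (gcomm c y) = sc (p3 (\<psi> c)) (F y)"
proof -
  define K where "K = (\<lambda>c. \<psi> (gcomm c y))"
  have Kadd: "K (c1 \<star> c2) = K c1 + K c2" if c12: "c1 \<in> L2" "c2 \<in> L2" for c1 c2
  proof -
    have G1: "c1 \<in> G" using L2G[OF c12(1)] .
    have G2: "c2 \<in> G" using L2G[OF c12(2)] .
    have e: "gcomm (c1 \<star> c2) y = (c1 \<star> gcomm c2 y \<star> gi c1) \<star> gcomm c1 y" using I2[OF G1 G2 y] .
    have m1: "c1 \<star> gcomm c2 y \<star> gi c1 \<in> L2" using L2_conj[OF G1 L3L2[OF comm23[OF c12(2) y]]] .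
    have m2: "gcomm c1 y \<in> L2" using L3L2[OF comm23[OF c12(1) y]] .
    have q: "\<psi> (c1 \<star> gcomm c2 y \<star> gi c1) = \<psi> (gcomm c2 y)" using conj_L3[OF G1 comm23[OF c12(2) y]] .
    show ?thesis unfolding K_def e psi_mult[OF m1 m2] q by (simp add: add.commute)
  qed
  have Keq: "K c1 = K c2" if c12: "c1 \<in> L2" "c2 \<in> L2" "\<psi> c1 = \<psi> c2" for c1 c2
  proof -
    define d where "d = gi c2 \<star> c1"
    have d: "d \<in> L2" unfolding d_def using L2_mult[OF L2_inv[OF c12(2)] c12(1)] .
    have "\<psi> d = 0" unfolding d_def psi_mult[OF L2_inv[OF c12(2)] c12(1)] psi_inv[OF c12(2)] c12(3) by simp
    then have "d \<in> L4" using psi_zero[OF d] by simp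
    then have "gcomm d y \<in> L4" using comm45 y by simp
    then have "K d = 0" unfolding K_def using psi_L4 by simp
    moreover have "c1 = c2 \<star> d" unfolding d_def using L2G[OF c12(1)] L2G[OF c12(2)] by (simp add: gs)
    ultimately show ?thesis using Kadd[OF c12(2) d] by simp
  qed
  have Kpow: "K (x [^]\<^bsub>Gbar\<^esub> (i::int)) = sc i (K x)" if "x \<in> L2" for x i
    by (rule pow_additive[OF L2sub Kadd that])
  define CA where "CA = gcomm gC gA"
  define CB where "CB = gcomm gC gB"
  have CA3: "CA \<in> L3" unfolding CA_def using comm23[OF gC_L2 gA_carrier] .
  have CB3: "CB \<in> L3" unfolding CB_def using comm23[OF gC_L2 gB_carrier] .
  have CA2: "CA \<in> L2" using L3L2[OF CA3] .
  have CB2: "CB \<in> L2" using L3L2[OF CB3] .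
  have KCA: "K CA = 0" unfolding K_def using psi_L4[OF comm34[OF CA3 y]] .
  have KCB: "K CB = 0" unfolding K_def using psi_L4[OF comm34[OF CB3 y]] .
  define c' where "c' = gC [^]\<^bsub>Gbar\<^esub> (p3 (\<psi> c)) \<star> CA [^]\<^bsub>Gbar\<^esub> (p1 (\<psi> c)) \<star> CB [^]\<^bsub>Gbar\<^esub> (p2 (\<psi> c))"
  have pC: "gC [^]\<^bsub>Gbar\<^esub> (i::int) \<in> L2" for i using GB.subgroup_int_pow_closed[OF L2sub gC_L2] .
  have pA: "CA [^]\<^bsub>Gbar\<^esub> (i::int) \<in> L2" for i using GB.subgroup_int_pow_closed[OF L2sub CA2] .
  have pB: "CB [^]\<^bsub>Gbar\<^esub> (i::int) \<in> L2" for i using GB.subgroup_int_pow_closed[OF L2sub CB2] .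
  have c'L2: "c' \<in> L2" unfolding c'_def using L2_mult[OF L2_mult[OF pC pA] pB] .
  have "\<psi> c' = \<psi> c" unfolding c'_def psi_mult[OF L2_mult[OF pC pA] pB] psi_mult[OF pC pA]
      psi_pow[OF gC_L2] psi_pow[OF CA2] psi_pow[OF CB2]
    by (simp add: psi_C psi_CA psi_CB CA_def CB_def sc_def prod_eq_iff)
  then have "K c = K c'" using Keq[OF c c'L2] by simp
  also have "\<dots> = sc (p3 (\<psi> c)) (K gC)" unfolding c'_def Kadd[OF L2_mult[OF pC pA] pB] Kadd[OF pC pA]
      Kpow[OF gC_L2] Kpow[OF CA2] Kpow[OF CB2] KCA KCB
    by (simp add: sc_def zero_prod_def)
  finally show ?thesis unfolding K_def F_def .
qed

end

lemma dvd_lin: "(n::int) dvd a \<Longrightarrow> n dvd b \<Longrightarrow> c = a + b \<Longrightarrow> n dvd c" by simp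
lemma dvd_lin3: "(n::int) dvd a \<Longrightarrow> n dvd b \<Longrightarrow> n dvd d \<Longrightarrow> c = a + b + d \<Longrightarrow> n dvd c" by simp
lemma dvd_neg': "(n::int) dvd a \<Longrightarrow> c = - a \<Longrightarrow> n dvd c" by simp

lemma modeq2_dvd: "modeq2 n u v \<longleftrightarrow> n dvd fst u - fst v \<and> n dvd snd u - snd v"
  by (simp add: modeq2_def mod_eq_dvd_iff)
lemma modeq3_dvd: "modeq3 n u v \<longleftrightarrow> n dvd p1 u - p1 v \<and> n dvd p2 u - p2 v \<and> n dvd p3 u - p3 v"
  by (simp add: modeq3_def mod_eq_dvd_iff)

context P7 begin

lemma F_mult: assumes y: "y \<in> G" and z: "z \<in> G" shows "F (y \<star> z) = F y + F z"
proof -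
  have e: "gcomm gC (y \<star> z) = gcomm gC y \<star> (y \<star> gcomm gC z \<star> gi y)" using I1[OF gC_G y z] .
  have m1: "gcomm gC y \<in> L2" using L3L2[OF comm23[OF gC_L2 y]] .
  have m2: "y \<star> gcomm gC z \<star> gi y \<in> L2" using L2_conj[OF y L3L2[OF comm23[OF gC_L2 z]]] .
  have q: "\<psi> (y \<star> gcomm gC z \<star> gi y) = \<psi> (gcomm gC z)" using conj_L3[OF y comm23[OF gC_L2 z]] .
  show ?thesis unfolding F_def e psi_mult[OF m1 m2] q ..
qed

lemma F_pow: "y \<in> G \<Longrightarrow> F (y [^]\<^bsub>Gbar\<^esub> (i::int)) = sc i (F y)"
  by (rule pow_additive[OF GB.subgroup_self F_mult])

lemma F_one: "F \<one>\<^bsub>Gbar\<^esub> = 0"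
  using F_mult[OF GB.one_closed GB.one_closed] by simp

lemma F_inv: assumes y: "y \<in> G" shows "F (gi y) = - F y"
proof -
  have "F (y \<star> gi y) = F y + F (gi y)" using F_mult[OF y GB.inv_closed[OF y]] .
  then have "F y + F (gi y) = 0" using F_one y by simp
  then show ?thesis by (simp add: minus_unique)
qed

lemma FA: "F gA = (1,0,0)" unfolding F_def using psi_CA .
lemma FB: "F gB = (0,1,0)" unfolding F_def using psi_CB .

lemma F3: assumes y: "y \<in> G" shows "p3 (F y) = 0"
proof -
  define S where "S = {y \<in> G. p3 (F y) = 0}"
  have "subgroup S Gbar"
  proof (rule GB.subgroupI)
    show "S \<subseteq> G" unfolding S_def by blast
    have "\<one>\<^bsub>Gbar\<^esub> \<in> S" unfolding S_def using F_one by simp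
    then show "S \<noteq> {}" by blast
  next
    fix a assume "a \<in> S" then show "gi a \<in> S" unfolding S_def using F_inv by simp
  next
    fix a b assume "a \<in> S" "b \<in> S" then show "a \<star> b \<in> S" unfolding S_def using F_mult by simp
  qed
  moreover have "gA \<in> S" unfolding S_def using gA_carrier FA by simp
  moreover have "gB \<in> S" unfolding S_def using gB_carrier FB by simp
  ultimately have "G \<subseteq> S" using gen_Gbar by simp
  then show ?thesis using y unfolding S_def by blast
qed

lemma conj_psi:
  assumes g: "g \<in> G" and c: "c \<in> L2"
  shows "\<psi> (g \<star> c \<star> gi g) = \<psi> c - sc (p3 (\<psi> c)) (F g)"
proof -
  have cG: "c \<in> G" using L2G[OF c] .
  have e: "g \<star> c \<star> gi g = gi (gcomm c g) \<star> c" using I4[OF g cG] I3[OF cG g] by simp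
  have m: "gcomm c g \<in> L2" using comm12[OF cG g] .
  have "\<psi> (gi (gcomm c g) \<star> c) = \<psi> (gi (gcomm c g)) + \<psi> c" using psi_mult[OF L2_inv[OF m] c] .
  then show ?thesis unfolding e psi_inv[OF m] comm_psi[OF c g] by simp
qed

lemma conj_psi3: "g \<in> G \<Longrightarrow> c \<in> L2 \<Longrightarrow> p3 (\<psi> (g \<star> c \<star> gi g)) = p3 (\<psi> c)"
  using conj_psi F3 by simp

lemma F_L2: assumes c: "c \<in> L2" shows "F c = 0"
proof -
  have cG: "c \<in> G" using L2G[OF c] .
  have "gC \<star> gC \<star> gi gC \<star> gi gC = \<one>\<^bsub>Gbar\<^esub>" using gC_G by (simp add: gs)
  then have FC: "F gC = 0" unfolding F_def gcomm_def using psi_one by simp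
  have "F c = \<psi> (gi (gcomm c gC))" unfolding F_def using I3[OF cG gC_G] by simp
  also have "\<dots> = 0" using psi_inv[OF comm12[OF cG gC_G]] comm_psi[OF c gC_G] FC by (simp add: sc_def zero_prod_def)
  finally show ?thesis .
qed

lemma FA_pow: "F (gA [^]\<^bsub>Gbar\<^esub> (i::int)) = (i,0,0)"
  using F_pow[OF gA_carrier] FA by (simp add: sc_def)
lemma FB_pow: "F (gB [^]\<^bsub>Gbar\<^esub> (i::int)) = (0,i,0)"
  using F_pow[OF gB_carrier] FB by (simp add: sc_def)

lemma phi1_F: assumes g: "g \<in> G"
  shows "int N dvd fst (\<phi>1 g) - p1 (F g) \<and> int N dvd snd (\<phi>1 g) - p2 (F g)"
proof -
  define n where "n = int N"
  have hom1: "n dvd fst (\<phi>1 (x \<star> y)) - fst (\<phi>1 x) - fst (\<phi>1 y)" if "x \<in> G" "y \<in> G" for x y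
    using phi1_hom that unfolding modeq2_dvd n_def by (simp add: diff_diff_add)
  have hom2: "n dvd snd (\<phi>1 (x \<star> y)) - snd (\<phi>1 x) - snd (\<phi>1 y)" if "x \<in> G" "y \<in> G" for x y
    using phi1_hom that unfolding modeq2_dvd n_def by (simp add: diff_diff_add)
  have one1: "n dvd fst (\<phi>1 \<one>\<^bsub>Gbar\<^esub>)" using hom1[OF GB.one_closed GB.one_closed] by simp
  have one2: "n dvd snd (\<phi>1 \<one>\<^bsub>Gbar\<^esub>)" using hom2[OF GB.one_closed GB.one_closed] by simp
  define S where "S = {g \<in> G. n dvd fst (\<phi>1 g) - p1 (F g) \<and> n dvd snd (\<phi>1 g) - p2 (F g)}"
  have "subgroup S Gbar"
  proof (rule GB.subgroupI)
    show "S \<subseteq> G" unfolding S_def by blast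
    have "\<one>\<^bsub>Gbar\<^esub> \<in> S" unfolding S_def using F_one one1 one2 by simp
    then show "S \<noteq> {}" by blast
  next
    fix a assume a: "a \<in> S"
    then have aG: "a \<in> G" and a1: "n dvd fst (\<phi>1 a) - p1 (F a)" and a2: "n dvd snd (\<phi>1 a) - p2 (F a)"
      unfolding S_def by auto
    have h1: "n dvd fst (\<phi>1 \<one>\<^bsub>Gbar\<^esub>) - fst (\<phi>1 (gi a)) - fst (\<phi>1 a)"
      using hom1[OF GB.inv_closed[OF aG] aG] GB.l_inv[OF aG] by simp
    have i1: "n dvd fst (\<phi>1 (gi a)) + fst (\<phi>1 a)"
      using dvd_diff[OF one1 h1] by simp
    have h2: "n dvd snd (\<phi>1 \<one>\<^bsub>Gbar\<^esub>) - snd (\<phi>1 (gi a)) - snd (\<phi>1 a)"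
      using hom2[OF GB.inv_closed[OF aG] aG] GB.l_inv[OF aG] by simp
    have i2: "n dvd snd (\<phi>1 (gi a)) + snd (\<phi>1 a)"
      using dvd_diff[OF one2 h2] by simp
    have "n dvd fst (\<phi>1 (gi a)) - p1 (F (gi a))"
      by (rule dvd_lin[OF i1 dvd_minus_iff[THEN iffD2, OF a1]]) (simp add: F_inv aG)
    moreover have "n dvd snd (\<phi>1 (gi a)) - p2 (F (gi a))"
      by (rule dvd_lin[OF i2 dvd_minus_iff[THEN iffD2, OF a2]]) (simp add: F_inv aG)
    ultimately show "gi a \<in> S" unfolding S_def using aG by simp
  next
    fix a b assume a: "a \<in> S" and b: "b \<in> S"
    then have aG: "a \<in> G" and a1: "n dvd fst (\<phi>1 a) - p1 (F a)" and a2: "n dvd snd (\<phi>1 a) - p2 (F a)"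
      and bG: "b \<in> G" and b1: "n dvd fst (\<phi>1 b) - p1 (F b)" and b2: "n dvd snd (\<phi>1 b) - p2 (F b)"
      unfolding S_def by auto
    have "n dvd fst (\<phi>1 (a \<star> b)) - p1 (F (a \<star> b))"
      by (rule dvd_lin3[OF hom1[OF aG bG] a1 b1]) (simp add: F_mult aG bG)
    moreover have "n dvd snd (\<phi>1 (a \<star> b)) - p2 (F (a \<star> b))"
      by (rule dvd_lin3[OF hom2[OF aG bG] a2 b2]) (simp add: F_mult aG bG)
    ultimately show "a \<star> b \<in> S" unfolding S_def using aG bG by simp
  qed
  moreover have "gA \<in> S" unfolding S_def n_def using gA_carrier FA phi1_A unfolding modeq2_dvd by simp
  moreover have "gB \<in> S" unfolding S_def n_def using gB_carrier FB phi1_B unfolding modeq2_dvd by simp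
  ultimately have "G \<subseteq> S" using gen_Gbar by simp
  then show ?thesis using g unfolding S_def n_def by blast
qed

definition Phi where "Phi = {x \<in> carrier Gbar. modeq2 (int N) (\<phi>1 x) (0,0)}"

lemma Phi_iff: "x \<in> Phi \<longleftrightarrow> x \<in> G \<and> int N dvd p1 (F x) \<and> int N dvd p2 (F x)"
proof
  assume x: "x \<in> Phi"
  then have xG: "x \<in> G" and d: "int N dvd fst (\<phi>1 x)" "int N dvd snd (\<phi>1 x)"
    unfolding Phi_def modeq2_dvd by auto
  have "int N dvd fst (\<phi>1 x) - (fst (\<phi>1 x) - p1 (F x))" using dvd_diff[OF d(1) conjunct1[OF phi1_F[OF xG]]] .
  moreover have "int N dvd snd (\<phi>1 x) - (snd (\<phi>1 x) - p2 (F x))" using dvd_diff[OF d(2) conjunct2[OF phi1_F[OF xG]]] .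
  ultimately show "x \<in> G \<and> int N dvd p1 (F x) \<and> int N dvd p2 (F x)" using xG by simp
next
  assume x: "x \<in> G \<and> int N dvd p1 (F x) \<and> int N dvd p2 (F x)"
  have "int N dvd (fst (\<phi>1 x) - p1 (F x)) + p1 (F x)" using dvd_add[OF conjunct1[OF phi1_F] ] x by blast
  moreover have "int N dvd (snd (\<phi>1 x) - p2 (F x)) + p2 (F x)" using dvd_add[OF conjunct2[OF phi1_F] ] x by blast
  ultimately have "int N dvd fst (\<phi>1 x)" "int N dvd snd (\<phi>1 x)" by simp_all
  then show "x \<in> Phi" unfolding Phi_def modeq2_dvd using x by simp
qed

lemma Phi_G: "x \<in> Phi \<Longrightarrow> x \<in> G" using Phi_iff by blast

lemma Phi_sub: "subgroup Phi Gbar"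
proof (rule GB.subgroupI)
  show "Phi \<subseteq> G" using Phi_G by blast
  have "\<one>\<^bsub>Gbar\<^esub> \<in> Phi" unfolding Phi_iff using F_one by simp
  then show "Phi \<noteq> {}" by blast
next
  fix a assume a: "a \<in> Phi"
  then have aG: "a \<in> G" and d: "int N dvd p1 (F a)" "int N dvd p2 (F a)" using Phi_iff by auto
  have "F (gi a) = - F a" using F_inv[OF aG] .
  then show "gi a \<in> Phi" unfolding Phi_iff using aG d by simp
next
  fix a b assume a: "a \<in> Phi" and b: "b \<in> Phi"
  then have aG: "a \<in> G" and d: "int N dvd p1 (F a)" "int N dvd p2 (F a)"
    and bG: "b \<in> G" and e: "int N dvd p1 (F b)" "int N dvd p2 (F b)" using Phi_iff by auto
  have "F (a \<star> b) = F a + F b" using F_mult[OF aG bG] .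
  then show "a \<star> b \<in> Phi" unfolding Phi_iff using aG bG d e by simp
qed

lemma L2_Phi: assumes c: "c \<in> L2" shows "c \<in> Phi"
  unfolding Phi_iff using F_L2[OF c] L2G[OF c] by simp

end

context P7 begin

definition Np :: int where "Np = Nprime N"

lemma Np_dvd: "Np dvd int N"
  unfolding Np_def Nprime_def by (auto elim!: evenE)

lemma phi2_mult: assumes x: "x \<in> Phi" and y: "y \<in> Phi"
  shows "Np dvd \<phi>2 (x \<star> y) - \<phi>2 x - \<phi>2 y"
proof -
  have "\<phi>2 (x \<star> y) mod Np = (\<phi>2 x + \<phi>2 y) mod Np"
    using phi2_hom x y unfolding Phi_def Np_def by blast
  then show ?thesis by (simp add: mod_eq_dvd_iff diff_diff_add)
qed

lemma phi2_one: "Np dvd \<phi>2 \<one>\<^bsub>Gbar\<^esub>"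
  using phi2_mult[OF subgroup.one_closed[OF Phi_sub] subgroup.one_closed[OF Phi_sub]] by simp

lemma phi2_inv: assumes x: "x \<in> Phi" shows "Np dvd \<phi>2 (gi x) + \<phi>2 x"
proof -
  have xG: "x \<in> G" using Phi_G[OF x] .
  have "Np dvd \<phi>2 (gi x \<star> x) - \<phi>2 (gi x) - \<phi>2 x"
    using phi2_mult[OF subgroup.m_inv_closed[OF Phi_sub x] x] .
  then have "Np dvd \<phi>2 \<one>\<^bsub>Gbar\<^esub> - \<phi>2 (gi x) - \<phi>2 x" using GB.l_inv[OF xG] by simp
  from dvd_diff[OF phi2_one this] show ?thesis by simp
qed

lemma phi2_pow_nat: assumes x: "x \<in> Phi" shows "Np dvd \<phi>2 (x [^]\<^bsub>Gbar\<^esub> (n::nat)) - int n * \<phi>2 x"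
proof (induction n)
  case 0 then show ?case using phi2_one by simp
next
  case (Suc n)
  have p: "x [^]\<^bsub>Gbar\<^esub> n \<in> Phi" using sub_nat_pow[OF Phi_sub x] .
  have e: "x [^]\<^bsub>Gbar\<^esub> (Suc n) = x [^]\<^bsub>Gbar\<^esub> n \<star> x" by simp
  have "Np dvd \<phi>2 (x [^]\<^bsub>Gbar\<^esub> n \<star> x) - \<phi>2 (x [^]\<^bsub>Gbar\<^esub> n) - \<phi>2 x" using phi2_mult[OF p x] .
  from dvd_add[OF this Suc.IH] show ?case unfolding e by (simp add: algebra_simps)
qed

lemma phi2_pow: assumes x: "x \<in> Phi" shows "Np dvd \<phi>2 (x [^]\<^bsub>Gbar\<^esub> (i::int)) - i * \<phi>2 x"
proof (cases "i < 0")
  case True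
  have xG: "x \<in> G" using Phi_G[OF x] .
  have "x [^]\<^bsub>Gbar\<^esub> i = x [^]\<^bsub>Gbar\<^esub> (- int (nat (-i)))" using True by simp
  also have "\<dots> = gi (x [^]\<^bsub>Gbar\<^esub> (nat (-i)))" by (rule GB.int_pow_neg_int[OF xG])
  finally have e: "x [^]\<^bsub>Gbar\<^esub> i = gi (x [^]\<^bsub>Gbar\<^esub> (nat (-i)))" .
  have p: "x [^]\<^bsub>Gbar\<^esub> (nat (-i)) \<in> Phi" using sub_nat_pow[OF Phi_sub x] .
  have "Np dvd (\<phi>2 (gi (x [^]\<^bsub>Gbar\<^esub> (nat (-i)))) + \<phi>2 (x [^]\<^bsub>Gbar\<^esub> (nat (-i))))
     - (\<phi>2 (x [^]\<^bsub>Gbar\<^esub> (nat (-i))) - int (nat (-i)) * \<phi>2 x)"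
    using dvd_diff[OF phi2_inv[OF p] phi2_pow_nat[OF x]] .
  then show ?thesis unfolding e using True by (simp add: algebra_simps)
next
  case False
  have "x [^]\<^bsub>Gbar\<^esub> i = x [^]\<^bsub>Gbar\<^esub> (int (nat i))" using False by simp
  then have e: "x [^]\<^bsub>Gbar\<^esub> i = x [^]\<^bsub>Gbar\<^esub> (nat i)" by (simp only: int_pow_int)
  show ?thesis unfolding e using phi2_pow_nat[OF x, of "nat i"] False by simp
qed

lemma phi2_comm: assumes x: "x \<in> Phi" and y: "y \<in> Phi" shows "Np dvd \<phi>2 (gcomm x y)"
proof -
  have xi: "gi x \<in> Phi" using subgroup.m_inv_closed[OF Phi_sub x] .
  have yi: "gi y \<in> Phi" using subgroup.m_inv_closed[OF Phi_sub y] .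
  have xy: "x \<star> y \<in> Phi" using subgroup.m_closed[OF Phi_sub x y] .
  have xyx: "x \<star> y \<star> gi x \<in> Phi" using subgroup.m_closed[OF Phi_sub xy xi] .
  have d1: "Np dvd \<phi>2 (x \<star> y \<star> gi x \<star> gi y) - \<phi>2 (x \<star> y \<star> gi x) - \<phi>2 (gi y)" using phi2_mult[OF xyx yi] .
  have d2: "Np dvd \<phi>2 (x \<star> y \<star> gi x) - \<phi>2 (x \<star> y) - \<phi>2 (gi x)" using phi2_mult[OF xy xi] .
  have d3: "Np dvd \<phi>2 (x \<star> y) - \<phi>2 x - \<phi>2 y" using phi2_mult[OF x y] .
  have d4: "Np dvd \<phi>2 (gi x) + \<phi>2 x" using phi2_inv[OF x] .
  have d5: "Np dvd \<phi>2 (gi y) + \<phi>2 y" using phi2_inv[OF y] .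
  have "Np dvd (\<phi>2 (x \<star> y \<star> gi x \<star> gi y) - \<phi>2 (x \<star> y \<star> gi x) - \<phi>2 (gi y))
     + (\<phi>2 (x \<star> y \<star> gi x) - \<phi>2 (x \<star> y) - \<phi>2 (gi x)) + (\<phi>2 (x \<star> y) - \<phi>2 x - \<phi>2 y)
     + (\<phi>2 (gi x) + \<phi>2 x) + (\<phi>2 (gi y) + \<phi>2 y)"
    using dvd_add[OF dvd_add[OF dvd_add[OF dvd_add[OF d1 d2] d3] d4] d5] .
  then show ?thesis unfolding gcomm_def by (simp add: algebra_simps)
qed

lemma phi2_conjC: assumes g: "g \<in> G" shows "Np dvd \<phi>2 (g \<star> gC \<star> gi g) - 1"
proof -
  obtain i j k where k: "k \<in> lcs 2" and ge: "g = gA [^]\<^bsub>Gbar\<^esub> (i::int) \<star> gB [^]\<^bsub>Gbar\<^esub> (j::int) \<star> k"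
    using decomp[OF g] by blast
  have k2: "k \<in> L2" using k by (simp add: lcs_def)
  have kG: "k \<in> G" using L2G[OF k2] .
  define a where "a = gA [^]\<^bsub>Gbar\<^esub> i"
  define b where "b = gB [^]\<^bsub>Gbar\<^esub> j"
  have aG: "a \<in> G" unfolding a_def using gA_carrier by simp
  have bG: "b \<in> G" unfolding b_def using gB_carrier by simp
  define h where "h = a \<star> b"
  have hG: "h \<in> G" unfolding h_def using aG bG by simp
  have e1: "g \<star> gC \<star> gi g = (h \<star> gcomm k gC \<star> gi h) \<star> (h \<star> gC \<star> gi h)"
    unfolding ge a_def[symmetric] b_def[symmetric] h_def[symmetric]
    using hG kG gC_G by (simp add: gcomm_def gs)
  have e2: "h \<star> gcomm k gC \<star> gi h = gcomm (h \<star> k \<star> gi h) (h \<star> gC \<star> gi h)"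
    using gcomm_conj[OF hG kG gC_G] .
  have m1: "h \<star> k \<star> gi h \<in> L2" using L2_conj[OF hG k2] .
  have m2: "h \<star> gC \<star> gi h \<in> L2" using L2_conj[OF hG gC_L2] .
  have X: "h \<star> gcomm k gC \<star> gi h \<in> L2" using L2_conj[OF hG comm12[OF kG gC_G]] .
  have dX: "Np dvd \<phi>2 (h \<star> gcomm k gC \<star> gi h)" unfolding e2 using phi2_comm[OF L2_Phi[OF m1] L2_Phi[OF m2]] .
  have "h \<star> gC \<star> gi h = gA [^]\<^bsub>Gbar\<^esub> i \<star> gB [^]\<^bsub>Gbar\<^esub> j \<star> gC \<star> gB [^]\<^bsub>Gbar\<^esub> (-j) \<star> gA [^]\<^bsub>Gbar\<^esub> (-i)"
    unfolding h_def a_def b_def using gA_carrier gB_carrier gC_G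
    by (simp add: GB.int_pow_neg gs)
  then have "\<phi>2 (h \<star> gC \<star> gi h) mod Np = 1 mod Np" using phi2_C unfolding Np_def by simp
  then have dY: "Np dvd \<phi>2 (h \<star> gC \<star> gi h) - 1" by (simp add: mod_eq_dvd_iff)
  have dm: "Np dvd \<phi>2 ((h \<star> gcomm k gC \<star> gi h) \<star> (h \<star> gC \<star> gi h)) - \<phi>2 (h \<star> gcomm k gC \<star> gi h) - \<phi>2 (h \<star> gC \<star> gi h)"
    using phi2_mult[OF L2_Phi[OF X] L2_Phi[OF m2]] .
  have "Np dvd (\<phi>2 ((h \<star> gcomm k gC \<star> gi h) \<star> (h \<star> gC \<star> gi h)) - \<phi>2 (h \<star> gcomm k gC \<star> gi h) - \<phi>2 (h \<star> gC \<star> gi h))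
       + \<phi>2 (h \<star> gcomm k gC \<star> gi h) + (\<phi>2 (h \<star> gC \<star> gi h) - 1)"
    using dvd_add[OF dvd_add[OF dm dX] dY] .
  then show ?thesis unfolding e1 by simp
qed

definition NC where "NC = generate Gbar {g \<star> gC \<star> gi g | g. g \<in> G}"

lemma NC_normal: "NC \<lhd> Gbar"
  unfolding NC_def
proof (rule GB.normal_generateI)
  show "{g \<star> gC \<star> gi g |g. g \<in> G} \<subseteq> G" using gC_G by auto
next
  fix h g assume h: "h \<in> {g \<star> gC \<star> gi g |g. g \<in> G}" and g: "g \<in> G"
  then obtain g' where g': "g' \<in> G" "h = g' \<star> gC \<star> gi g'" by blast
  have "g \<star> h \<star> gi g = (g \<star> g') \<star> gC \<star> gi (g \<star> g')" unfolding g'(2) using g g'(1) gC_G by (simp add: gs)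
  moreover have "g \<star> g' \<in> G" using g g'(1) by simp
  ultimately show "g \<star> h \<star> gi g \<in> {g \<star> gC \<star> gi g |g. g \<in> G}" by blast
qed

lemma conjC_NC: "g \<in> G \<Longrightarrow> g \<star> gC \<star> gi g \<in> NC"
  unfolding NC_def by (rule generate.incl) blast

lemma C_NC: "gC \<in> NC" using conjC_NC[OF GB.one_closed] gC_G by simp

lemma L2_NC: "L2 \<subseteq> NC"
proof -
  interpret NN: normal NC Gbar by (rule NC_normal)
  have S1: "\<forall>y\<in>G. gcomm x y \<in> NC" if x: "x \<in> G" "gcomm x gA \<in> NC" "gcomm x gB \<in> NC" for x
  proof -
    define S where "S = {y \<in> G. gcomm x y \<in> NC}"
    have "subgroup S Gbar"
    proof (rule GB.subgroupI)
      show "S \<subseteq> G" unfolding S_def by blast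
      have "gcomm x \<one>\<^bsub>Gbar\<^esub> = \<one>\<^bsub>Gbar\<^esub>" using x(1) by (simp add: gcomm_def)
      then have "\<one>\<^bsub>Gbar\<^esub> \<in> S" unfolding S_def using NN.one_closed by simp
      then show "S \<noteq> {}" by blast
    next
      fix a assume a: "a \<in> S"
      then have aG: "a \<in> G" and an: "gcomm x a \<in> NC" unfolding S_def by auto
      have "gcomm x (gi a) = gi a \<star> gi (gcomm x a) \<star> a" using I5[OF x(1) aG] .
      moreover have "gi a \<star> gi (gcomm x a) \<star> a \<in> NC" using NN.inv_op_closed1[OF aG NN.m_inv_closed[OF an]] .
      ultimately show "gi a \<in> S" unfolding S_def using aG by simp
    next
      fix a b assume a: "a \<in> S" and b: "b \<in> S"
      then have aG: "a \<in> G" and an: "gcomm x a \<in> NC" and bG: "b \<in> G" and bn: "gcomm x b \<in> NC"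
        unfolding S_def by auto
      have "gcomm x (a \<star> b) = gcomm x a \<star> (a \<star> gcomm x b \<star> gi a)" using I1[OF x(1) aG bG] .
      moreover have "gcomm x a \<star> (a \<star> gcomm x b \<star> gi a) \<in> NC"
        using NN.m_closed[OF an NN.inv_op_closed2[OF aG bn]] .
      ultimately show "a \<star> b \<in> S" unfolding S_def using aG bG by simp
    qed
    moreover have "gA \<in> S" "gB \<in> S" unfolding S_def using x gA_carrier gB_carrier by auto
    ultimately have "G \<subseteq> S" using gen_Gbar by simp
    then show ?thesis unfolding S_def by blast
  qed
  have "gcomm gA gA = \<one>\<^bsub>Gbar\<^esub>" using gA_carrier by (simp add: gcomm_def gs)
  then have AA: "gcomm gA gA \<in> NC" using NN.one_closed by simp
  have "gcomm gB gB = \<one>\<^bsub>Gbar\<^esub>" using gB_carrier by (simp add: gcomm_def gs)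
  then have BB: "gcomm gB gB \<in> NC" using NN.one_closed by simp
  have AB: "gcomm gA gB \<in> NC" using C_NC unfolding gC_def .
  have BA: "gcomm gB gA \<in> NC" using NN.m_inv_closed[OF AB] I3[OF gA_carrier gB_carrier] by simp
  have SA: "\<forall>y\<in>G. gcomm gA y \<in> NC" using S1[OF gA_carrier AA AB] .
  have SB: "\<forall>y\<in>G. gcomm gB y \<in> NC" using S1[OF gB_carrier BA BB] .
  define T where "T = {x \<in> G. \<forall>y\<in>G. gcomm x y \<in> NC}"
  have "subgroup T Gbar"
  proof (rule GB.subgroupI)
    show "T \<subseteq> G" unfolding T_def by blast
    have "\<forall>y\<in>G. gcomm \<one>\<^bsub>Gbar\<^esub> y \<in> NC" using NN.one_closed by (simp add: gcomm_def)
    then have "\<one>\<^bsub>Gbar\<^esub> \<in> T" unfolding T_def by simp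
    then show "T \<noteq> {}" by blast
  next
    fix a assume a: "a \<in> T"
    then have aG: "a \<in> G" and an: "\<forall>y\<in>G. gcomm a y \<in> NC" unfolding T_def by auto
    have "gcomm (gi a) y \<in> NC" if y: "y \<in> G" for y
    proof -
      have "gcomm (gi a) y = gi a \<star> gi (gcomm a y) \<star> a" using I6[OF aG y] .
      moreover have "gi a \<star> gi (gcomm a y) \<star> a \<in> NC" using NN.inv_op_closed1[OF aG NN.m_inv_closed] an y by blast
      ultimately show ?thesis by simp
    qed
    then show "gi a \<in> T" unfolding T_def using aG by simp
  next
    fix a b assume a: "a \<in> T" and b: "b \<in> T"
    then have aG: "a \<in> G" and an: "\<forall>y\<in>G. gcomm a y \<in> NC" and bG: "b \<in> G" and bn: "\<forall>y\<in>G. gcomm b y \<in> NC"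
      unfolding T_def by auto
    have "gcomm (a \<star> b) y \<in> NC" if y: "y \<in> G" for y
    proof -
      have "gcomm (a \<star> b) y = (a \<star> gcomm b y \<star> gi a) \<star> gcomm a y" using I2[OF aG bG y] .
      moreover have "(a \<star> gcomm b y \<star> gi a) \<star> gcomm a y \<in> NC"
        using NN.m_closed[OF NN.inv_op_closed2[OF aG] ] an bn y by blast
      ultimately show ?thesis by simp
    qed
    then show "a \<star> b \<in> T" unfolding T_def using aG bG by simp
  qed
  moreover have "gA \<in> T" "gB \<in> T" unfolding T_def using SA SB gA_carrier gB_carrier by auto
  ultimately have GT: "G \<subseteq> T" using gen_Gbar by simp
  have "{gcomm x y |x y. x \<in> lcs0 0 \<and> y \<in> G} \<subseteq> NC"
    using GT unfolding T_def by auto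
  then show ?thesis unfolding lcs0.simps sucs[symmetric]
    using GB.generate_subgroup_incl[OF _ NN.subgroup_axioms] by simp
qed

lemma phi2_psi: assumes c: "c \<in> L2" shows "Np dvd \<phi>2 c - p3 (\<psi> c)"
proof -
  define T where "T = {c \<in> L2. Np dvd \<phi>2 c - p3 (\<psi> c)}"
  have "subgroup T Gbar"
  proof (rule GB.subgroupI)
    show "T \<subseteq> G" unfolding T_def using L2G by blast
    have "\<one>\<^bsub>Gbar\<^esub> \<in> T" unfolding T_def using L2_one phi2_one psi_one by simp
    then show "T \<noteq> {}" by blast
  next
    fix a assume a: "a \<in> T"
    then have a2: "a \<in> L2" and d: "Np dvd \<phi>2 a - p3 (\<psi> a)" unfolding T_def by auto
    have "Np dvd (\<phi>2 (gi a) + \<phi>2 a) - (\<phi>2 a - p3 (\<psi> a))" using dvd_diff[OF phi2_inv[OF L2_Phi[OF a2]] d] .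
    then have "Np dvd \<phi>2 (gi a) - p3 (\<psi> (gi a))" using psi_inv[OF a2] by simp
    then show "gi a \<in> T" unfolding T_def using L2_inv[OF a2] by simp
  next
    fix a b assume a: "a \<in> T" and b: "b \<in> T"
    then have a2: "a \<in> L2" and da: "Np dvd \<phi>2 a - p3 (\<psi> a)" and b2: "b \<in> L2" and db: "Np dvd \<phi>2 b - p3 (\<psi> b)"
      unfolding T_def by auto
    have "Np dvd (\<phi>2 (a \<star> b) - \<phi>2 a - \<phi>2 b) + (\<phi>2 a - p3 (\<psi> a)) + (\<phi>2 b - p3 (\<psi> b))"
      using dvd_add[OF dvd_add[OF phi2_mult[OF L2_Phi[OF a2] L2_Phi[OF b2]] da] db] .
    then have "Np dvd \<phi>2 (a \<star> b) - p3 (\<psi> (a \<star> b))" by (simp add: psi_mult[OF a2 b2] algebra_simps)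
    then show "a \<star> b \<in> T" unfolding T_def using L2_mult[OF a2 b2] by simp
  qed
  moreover have "{g \<star> gC \<star> gi g | g. g \<in> G} \<subseteq> T"
  proof safe
    fix g assume g: "g \<in> G"
    have m: "g \<star> gC \<star> gi g \<in> L2" using L2_conj[OF g gC_L2] .
    have "p3 (\<psi> (g \<star> gC \<star> gi g)) = 1" using conj_psi3[OF g gC_L2] psi_C by simp
    then show "g \<star> gC \<star> gi g \<in> T" unfolding T_def using m phi2_conjC[OF g] by simp
  qed
  ultimately have "NC \<subseteq> T" unfolding NC_def using GB.generate_subgroup_incl by blast
  then show ?thesis using c L2_NC unfolding T_def by blast
qed

end

context P7 begin

definition vz :: "int \<times> int \<times> int \<Rightarrow> bool" where
  "vz v \<longleftrightarrow> Np dvd p1 v \<and> Np dvd p2 v \<and> Np dvd p3 v"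

lemma vz_add: "vz u \<Longrightarrow> vz v \<Longrightarrow> vz (u + v)" unfolding vz_def by simp
lemma vz_neg: "vz u \<Longrightarrow> vz (- u)" unfolding vz_def by simp
lemma vz_zero: "vz 0" unfolding vz_def by simp
lemma vz_sc: "Np dvd k \<Longrightarrow> vz (sc k v)" unfolding vz_def by simp
lemma vz_diff: "vz u \<Longrightarrow> vz v \<Longrightarrow> vz (u - v)" unfolding vz_def by simp

lemma comm_one_r: "x \<in> G \<Longrightarrow> gcomm x \<one>\<^bsub>Gbar\<^esub> = \<one>\<^bsub>Gbar\<^esub>" by (simp add: gcomm_def gs)
lemma comm_one_l: "x \<in> G \<Longrightarrow> gcomm \<one>\<^bsub>Gbar\<^esub> x = \<one>\<^bsub>Gbar\<^esub>" by (simp add: gcomm_def gs)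

lemma vz_comm_inv_r: assumes x: "x \<in> G" and y: "y \<in> G" and v: "vz (\<psi> (gcomm x y))"
  shows "vz (\<psi> (gcomm x (gi y)))"
proof -
  have m: "gcomm x y \<in> L2" using comm12[OF x y] .
  have yi: "gi y \<in> G" using y by simp
  have "gcomm x (gi y) = gi y \<star> gi (gcomm x y) \<star> gi (gi y)" using I5[OF x y] y by simp
  then have "\<psi> (gcomm x (gi y)) = \<psi> (gi (gcomm x y)) - sc (p3 (\<psi> (gi (gcomm x y)))) (F (gi y))"
    using conj_psi[OF yi L2_inv[OF m]] by simp
  then show ?thesis using v unfolding psi_inv[OF m] vz_def by simp
qed

lemma vz_comm_inv_l: assumes x: "x \<in> G" and y: "y \<in> G" and v: "vz (\<psi> (gcomm x y))"
  shows "vz (\<psi> (gcomm (gi x) y))"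
proof -
  have m: "gcomm x y \<in> L2" using comm12[OF x y] .
  have xi: "gi x \<in> G" using x by simp
  have "gcomm (gi x) y = gi x \<star> gi (gcomm x y) \<star> gi (gi x)" using I6[OF x y] x by simp
  then have "\<psi> (gcomm (gi x) y) = \<psi> (gi (gcomm x y)) - sc (p3 (\<psi> (gi (gcomm x y)))) (F (gi x))"
    using conj_psi[OF xi L2_inv[OF m]] by simp
  then show ?thesis using v unfolding psi_inv[OF m] vz_def by simp
qed

lemma vz_comm_mult_r: assumes x: "x \<in> G" and y: "y \<in> G" and z: "z \<in> G"
  and v: "vz (\<psi> (gcomm x y))" and w: "vz (\<psi> (gcomm x z))"
  shows "vz (\<psi> (gcomm x (y \<star> z)))"
proof -
  have e: "gcomm x (y \<star> z) = gcomm x y \<star> (y \<star> gcomm x z \<star> gi y)" using I1[OF x y z] .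
  have m1: "gcomm x y \<in> L2" using comm12[OF x y] .
  have m2: "gcomm x z \<in> L2" using comm12[OF x z] .
  have "\<psi> (gcomm x (y \<star> z)) = \<psi> (gcomm x y) + (\<psi> (gcomm x z) - sc (p3 (\<psi> (gcomm x z))) (F y))"
    unfolding e psi_mult[OF m1 L2_conj[OF y m2]] conj_psi[OF y m2] ..
  then show ?thesis using v w unfolding vz_def by simp
qed

lemma vz_comm_mult_l: assumes x: "x \<in> G" and y: "y \<in> G" and z: "z \<in> G"
  and v: "vz (\<psi> (gcomm x z))" and w: "vz (\<psi> (gcomm y z))"
  shows "vz (\<psi> (gcomm (x \<star> y) z))"
proof -
  have e: "gcomm (x \<star> y) z = (x \<star> gcomm y z \<star> gi x) \<star> gcomm x z" using I2[OF x y z] .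
  have m1: "gcomm x z \<in> L2" using comm12[OF x z] .
  have m2: "gcomm y z \<in> L2" using comm12[OF y z] .
  have "\<psi> (gcomm (x \<star> y) z) = (\<psi> (gcomm y z) - sc (p3 (\<psi> (gcomm y z))) (F x)) + \<psi> (gcomm x z)"
    unfolding e psi_mult[OF L2_conj[OF x m2] m1] conj_psi[OF x m2] ..
  then show ?thesis using v w unfolding vz_def by simp
qed

lemma vz_comm_all_l: assumes y: "y \<in> G" and a: "vz (\<psi> (gcomm gA y))" and b: "vz (\<psi> (gcomm gB y))"
  and x: "x \<in> G" shows "vz (\<psi> (gcomm x y))"
proof -
  define S where "S = {x \<in> G. vz (\<psi> (gcomm x y))}"
  have "subgroup S Gbar"
  proof (rule GB.subgroupI)
    show "S \<subseteq> G" unfolding S_def by blast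
    have "\<one>\<^bsub>Gbar\<^esub> \<in> S" unfolding S_def using comm_one_l[OF y] psi_one vz_zero by simp
    then show "S \<noteq> {}" by blast
  next
    fix a assume "a \<in> S" then show "gi a \<in> S" unfolding S_def using vz_comm_inv_l[OF _ y] by simp
  next
    fix a b assume "a \<in> S" "b \<in> S" then show "a \<star> b \<in> S" unfolding S_def using vz_comm_mult_l[OF _ _ y] by simp
  qed
  moreover have "gA \<in> S" "gB \<in> S" unfolding S_def using a b gA_carrier gB_carrier by auto
  ultimately have "G \<subseteq> S" using gen_Gbar by simp
  then show ?thesis using x unfolding S_def by blast
qed

lemma pow_comm: "x \<in> G \<Longrightarrow> gcomm x (x [^]\<^bsub>Gbar\<^esub> (i::int)) = \<one>\<^bsub>Gbar\<^esub>"
proof -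
  assume x: "x \<in> G"
  have "x \<star> x [^]\<^bsub>Gbar\<^esub> i = x [^]\<^bsub>Gbar\<^esub> i \<star> x"
    using GB.int_pow_mult[OF x, of 1 i] GB.int_pow_mult[OF x, of i 1] x by (simp add: add.commute)
  then show ?thesis unfolding gcomm_def using x by (simp add: gs)
qed

lemma psi_BA_step: "\<psi> (gcomm gB (gA [^]\<^bsub>Gbar\<^esub> (m+1::int))) = \<psi> (gcomm gB (gA [^]\<^bsub>Gbar\<^esub> m)) + (m, 0, -1)"
proof -
  have Am: "gA [^]\<^bsub>Gbar\<^esub> m \<in> G" using gA_carrier by simp
  have e1: "gA [^]\<^bsub>Gbar\<^esub> (m+1) = gA [^]\<^bsub>Gbar\<^esub> m \<star> gA" using GB.int_pow_mult[OF gA_carrier, of m 1] gA_carrier by simp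
  have e: "gcomm gB (gA [^]\<^bsub>Gbar\<^esub> (m+1)) = gcomm gB (gA [^]\<^bsub>Gbar\<^esub> m) \<star> (gA [^]\<^bsub>Gbar\<^esub> m \<star> gcomm gB gA \<star> gi (gA [^]\<^bsub>Gbar\<^esub> m))"
    unfolding e1 using I1[OF gB_carrier Am gA_carrier] .
  have m1: "gcomm gB (gA [^]\<^bsub>Gbar\<^esub> m) \<in> L2" using comm12[OF gB_carrier Am] .
  have m2: "gcomm gB gA \<in> L2" using comm12[OF gB_carrier gA_carrier] .
  have BA: "\<psi> (gcomm gB gA) = (0,0,-1)" using I3[OF gA_carrier gB_carrier] psi_inv[OF gC_L2] psi_C
    unfolding gC_def by simp
  show ?thesis unfolding e psi_mult[OF m1 L2_conj[OF Am m2]] conj_psi[OF Am m2] BA FA_pow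
    by (simp add: sc_def)
qed

lemma psi_AB_step: "\<psi> (gcomm gA (gB [^]\<^bsub>Gbar\<^esub> (m+1::int))) = \<psi> (gcomm gA (gB [^]\<^bsub>Gbar\<^esub> m)) + (0, -m, 1)"
proof -
  have Bm: "gB [^]\<^bsub>Gbar\<^esub> m \<in> G" using gB_carrier by simp
  have e1: "gB [^]\<^bsub>Gbar\<^esub> (m+1) = gB [^]\<^bsub>Gbar\<^esub> m \<star> gB" using GB.int_pow_mult[OF gB_carrier, of m 1] gB_carrier by simp
  have e: "gcomm gA (gB [^]\<^bsub>Gbar\<^esub> (m+1)) = gcomm gA (gB [^]\<^bsub>Gbar\<^esub> m) \<star> (gB [^]\<^bsub>Gbar\<^esub> m \<star> gcomm gA gB \<star> gi (gB [^]\<^bsub>Gbar\<^esub> m))"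
    unfolding e1 using I1[OF gA_carrier Bm gB_carrier] .
  have m1: "gcomm gA (gB [^]\<^bsub>Gbar\<^esub> m) \<in> L2" using comm12[OF gA_carrier Bm] .
  have m2: "gcomm gA gB \<in> L2" using comm12[OF gA_carrier gB_carrier] .
  have AB: "\<psi> (gcomm gA gB) = (0,0,1)" using psi_C unfolding gC_def .
  show ?thesis unfolding e psi_mult[OF m1 L2_conj[OF Bm m2]] conj_psi[OF Bm m2] AB FB_pow
    by (simp add: sc_def)
qed

lemma psi_BA: "2 * p1 (\<psi> (gcomm gB (gA [^]\<^bsub>Gbar\<^esub> (n::int)))) = n * (n - 1)
   \<and> p2 (\<psi> (gcomm gB (gA [^]\<^bsub>Gbar\<^esub> n))) = 0 \<and> p3 (\<psi> (gcomm gB (gA [^]\<^bsub>Gbar\<^esub> n))) = - n"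
proof (induction n rule: int_induct[where k = 0])
  case base
  then show ?case using comm_one_r[OF gB_carrier] psi_one by simp
next
  case (step1 i)
  then show ?case unfolding psi_BA_step by (simp add: algebra_simps)
next
  case (step2 i)
  then show ?case using psi_BA_step[of "i - 1"] by (simp add: algebra_simps)
qed

lemma psi_AB: "p1 (\<psi> (gcomm gA (gB [^]\<^bsub>Gbar\<^esub> (n::int)))) = 0
   \<and> 2 * p2 (\<psi> (gcomm gA (gB [^]\<^bsub>Gbar\<^esub> n))) = - n * (n - 1) \<and> p3 (\<psi> (gcomm gA (gB [^]\<^bsub>Gbar\<^esub> n))) = n"
proof (induction n rule: int_induct[where k = 0])
  case base
  then show ?case using comm_one_r[OF gA_carrier] psi_one by simp
next
  case (step1 i)
  then show ?case unfolding psi_AB_step by (simp add: algebra_simps)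
next
  case (step2 i)
  then show ?case using psi_AB_step[of "i - 1"] by (simp add: algebra_simps)
qed

lemma half_dvd: assumes "2 * p = n * (n - 1)" and "int N dvd n" shows "Np dvd p"
proof (cases "odd N")
  case True
  then have Np: "Np = int N" unfolding Np_def Nprime_def by simp
  obtain u where u: "n = int N * u" using assms(2) by blast
  have "even (u * (int N * u - 1))" using True by auto
  then obtain w where w: "u * (int N * u - 1) = 2 * w" by blast
  have "2 * p = int N * (u * (int N * u - 1))" using assms(1) u by (simp add: algebra_simps)
  also have "\<dots> = 2 * (int N * w)" using w by simp
  finally have "2 * p = 2 * (int N * w)" .
  then have "p = int N * w" by simp
  then show ?thesis unfolding Np by simp
next
  case False
  then obtain M where M: "N = 2 * M" by blast
  then have Np: "Np = int M" unfolding Np_def Nprime_def using False by simp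
  obtain u where u: "n = int N * u" using assms(2) by blast
  have "2 * p = 2 * (int M * (u * (n - 1)))" using assms(1) u M by (simp add: algebra_simps)
  then have "p = int M * (u * (n - 1))" by simp
  then show ?thesis unfolding Np by simp
qed

lemma Np_dvdN: "int N dvd x \<Longrightarrow> Np dvd x" using Np_dvd dvd_trans by blast

lemma vz_BA: "int N dvd n \<Longrightarrow> vz (\<psi> (gcomm gB (gA [^]\<^bsub>Gbar\<^esub> (n::int))))"
  unfolding vz_def using psi_BA[of n] half_dvd Np_dvdN by simp

lemma vz_AB: "int N dvd n \<Longrightarrow> vz (\<psi> (gcomm gA (gB [^]\<^bsub>Gbar\<^esub> (n::int))))"
proof -
  assume n: "int N dvd n"
  have "2 * (- p2 (\<psi> (gcomm gA (gB [^]\<^bsub>Gbar\<^esub> n)))) = n * (n - 1)" using psi_AB[of n] by simp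
  then have "Np dvd - p2 (\<psi> (gcomm gA (gB [^]\<^bsub>Gbar\<^esub> n)))" using half_dvd n by blast
  then show ?thesis unfolding vz_def using psi_AB[of n] Np_dvdN n by simp
qed

lemma vz_pA: assumes x: "x \<in> G" and n: "int N dvd n" shows "vz (\<psi> (gcomm x (gA [^]\<^bsub>Gbar\<^esub> (n::int))))"
proof (rule vz_comm_all_l[OF _ _ _ x])
  show "gA [^]\<^bsub>Gbar\<^esub> n \<in> G" using gA_carrier by simp
  show "vz (\<psi> (gcomm gA (gA [^]\<^bsub>Gbar\<^esub> n)))" using pow_comm[OF gA_carrier] psi_one vz_zero by simp
  show "vz (\<psi> (gcomm gB (gA [^]\<^bsub>Gbar\<^esub> n)))" using vz_BA[OF n] .
qed

lemma vz_pB: assumes x: "x \<in> G" and n: "int N dvd n" shows "vz (\<psi> (gcomm x (gB [^]\<^bsub>Gbar\<^esub> (n::int))))"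
proof (rule vz_comm_all_l[OF _ _ _ x])
  show "gB [^]\<^bsub>Gbar\<^esub> n \<in> G" using gB_carrier by simp
  show "vz (\<psi> (gcomm gB (gB [^]\<^bsub>Gbar\<^esub> n)))" using pow_comm[OF gB_carrier] psi_one vz_zero by simp
  show "vz (\<psi> (gcomm gA (gB [^]\<^bsub>Gbar\<^esub> n)))" using vz_AB[OF n] .
qed

lemma vz_pAB: assumes x: "x \<in> G" and a: "int N dvd a" and b: "int N dvd b"
  shows "vz (\<psi> (gcomm x (gA [^]\<^bsub>Gbar\<^esub> (a::int) \<star> gB [^]\<^bsub>Gbar\<^esub> (b::int))))"
  using vz_comm_mult_r[OF x _ _ vz_pA[OF x a] vz_pB[OF x b]] gA_carrier gB_carrier by simp

end

context P7 begin

definition psib :: "mat2 set \<Rightarrow> int \<times> int \<times> int" where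
  "psib d = \<psi> (gi (gA [^]\<^bsub>Gbar\<^esub> p1 (F d) \<star> gB [^]\<^bsub>Gbar\<^esub> p2 (F d)) \<star> d)"

lemma F_AB: assumes k: "k \<in> L2"
  shows "F (gA [^]\<^bsub>Gbar\<^esub> (i::int) \<star> gB [^]\<^bsub>Gbar\<^esub> (j::int) \<star> k) = (i, j, 0)"
proof -
  have a: "gA [^]\<^bsub>Gbar\<^esub> i \<in> G" "gB [^]\<^bsub>Gbar\<^esub> j \<in> G" using gA_carrier gB_carrier by auto
  show ?thesis using F_mult[OF GB.m_closed[OF a] L2G[OF k]] F_mult[OF a] F_L2[OF k] FA_pow FB_pow by simp
qed

lemma psib_eq: assumes k: "k \<in> L2"
  shows "psib (gA [^]\<^bsub>Gbar\<^esub> (i::int) \<star> gB [^]\<^bsub>Gbar\<^esub> (j::int) \<star> k) = \<psi> k"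
proof -
  have a: "gA [^]\<^bsub>Gbar\<^esub> i \<in> G" "gB [^]\<^bsub>Gbar\<^esub> j \<in> G" using gA_carrier gB_carrier by auto
  have "gi (gA [^]\<^bsub>Gbar\<^esub> i \<star> gB [^]\<^bsub>Gbar\<^esub> j) \<star> (gA [^]\<^bsub>Gbar\<^esub> i \<star> gB [^]\<^bsub>Gbar\<^esub> j \<star> k) = k"
    using a L2G[OF k] by (simp add: gs)
  then show ?thesis unfolding psib_def F_AB[OF k] by simp
qed

lemma psib_L2: assumes k: "k \<in> L2" shows "psib k = \<psi> k"
proof -
  have "k = gA [^]\<^bsub>Gbar\<^esub> (0::int) \<star> gB [^]\<^bsub>Gbar\<^esub> (0::int) \<star> k" using L2G[OF k] by simp
  then show ?thesis using psib_eq[OF k, of 0 0] by simp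
qed

lemma Phi_decomp: assumes d: "d \<in> Phi"
  shows "\<exists>a b k. int N dvd a \<and> int N dvd b \<and> k \<in> L2 \<and> d = gA [^]\<^bsub>Gbar\<^esub> (a::int) \<star> gB [^]\<^bsub>Gbar\<^esub> (b::int) \<star> k"
proof -
  have dG: "d \<in> G" and d1: "int N dvd p1 (F d)" and d2: "int N dvd p2 (F d)" using d Phi_iff by auto
  obtain i j k where k: "k \<in> lcs 2" and de: "d = gA [^]\<^bsub>Gbar\<^esub> (i::int) \<star> gB [^]\<^bsub>Gbar\<^esub> (j::int) \<star> k"
    using decomp[OF dG] by blast
  have k2: "k \<in> L2" using k by (simp add: lcs_def)
  have "F d = (i, j, 0)" unfolding de using F_AB[OF k2] .
  then show ?thesis using d1 d2 k2 de by auto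
qed

lemma phi2_h: assumes a: "int N dvd a" and b: "int N dvd b"
  shows "Np dvd \<phi>2 (gA [^]\<^bsub>Gbar\<^esub> (a::int) \<star> gB [^]\<^bsub>Gbar\<^esub> (b::int))"
proof -
  obtain u where u: "a = int N * u" using a by blast
  obtain v where v: "b = int N * v" using b by blast
  have AN: "gA [^]\<^bsub>Gbar\<^esub> N \<in> Phi" unfolding Phi_iff using FA_pow[of "int N"] gA_carrier by (simp add: int_pow_int)
  have BN: "gB [^]\<^bsub>Gbar\<^esub> N \<in> Phi" unfolding Phi_iff using FB_pow[of "int N"] gB_carrier by (simp add: int_pow_int)
  have ea: "gA [^]\<^bsub>Gbar\<^esub> a = (gA [^]\<^bsub>Gbar\<^esub> N) [^]\<^bsub>Gbar\<^esub> u"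
    unfolding u GB.int_pow_pow[OF gA_carrier, symmetric] int_pow_int ..
  have eb: "gB [^]\<^bsub>Gbar\<^esub> b = (gB [^]\<^bsub>Gbar\<^esub> N) [^]\<^bsub>Gbar\<^esub> v"
    unfolding v GB.int_pow_pow[OF gB_carrier, symmetric] int_pow_int ..
  have pa: "gA [^]\<^bsub>Gbar\<^esub> a \<in> Phi" unfolding ea using GB.subgroup_int_pow_closed[OF Phi_sub AN] .
  have pb: "gB [^]\<^bsub>Gbar\<^esub> b \<in> Phi" unfolding eb using GB.subgroup_int_pow_closed[OF Phi_sub BN] .
  have z1: "Np dvd \<phi>2 (gA [^]\<^bsub>Gbar\<^esub> N)" using phi2_AN unfolding Np_def by (simp add: dvd_eq_mod_eq_0)
  have z2: "Np dvd \<phi>2 (gB [^]\<^bsub>Gbar\<^esub> N)" using phi2_BN unfolding Np_def by (simp add: dvd_eq_mod_eq_0)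
  have da: "Np dvd \<phi>2 (gA [^]\<^bsub>Gbar\<^esub> a)"
    using dvd_add[OF phi2_pow[OF AN, of u] dvd_mult[OF z1, of u]] unfolding ea by simp
  have db: "Np dvd \<phi>2 (gB [^]\<^bsub>Gbar\<^esub> b)"
    using dvd_add[OF phi2_pow[OF BN, of v] dvd_mult[OF z2, of v]] unfolding eb by simp
  have "Np dvd (\<phi>2 (gA [^]\<^bsub>Gbar\<^esub> a \<star> gB [^]\<^bsub>Gbar\<^esub> b) - \<phi>2 (gA [^]\<^bsub>Gbar\<^esub> a) - \<phi>2 (gB [^]\<^bsub>Gbar\<^esub> b))
     + \<phi>2 (gA [^]\<^bsub>Gbar\<^esub> a) + \<phi>2 (gB [^]\<^bsub>Gbar\<^esub> b)"
    using dvd_add[OF dvd_add[OF phi2_mult[OF pa pb] da] db] .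
  then show ?thesis by simp
qed

lemma vz_F: "int N dvd p1 (F g) \<Longrightarrow> int N dvd p2 (F g) \<Longrightarrow> p3 (F g) = 0 \<Longrightarrow> vz (F g)"
  unfolding vz_def using Np_dvdN by simp

lemma psib_hom: assumes x: "x \<in> Phi" and y: "y \<in> Phi"
  shows "vz (psib (x \<star> y) - psib x - psib y)"
proof -
  obtain a b c where a: "int N dvd a" and b: "int N dvd b" and c: "c \<in> L2"
    and xe: "x = gA [^]\<^bsub>Gbar\<^esub> (a::int) \<star> gB [^]\<^bsub>Gbar\<^esub> (b::int) \<star> c" using Phi_decomp[OF x] by blast
  obtain a' b' c' where a': "int N dvd a'" and b': "int N dvd b'" and c': "c' \<in> L2"
    and ye: "y = gA [^]\<^bsub>Gbar\<^esub> (a'::int) \<star> gB [^]\<^bsub>Gbar\<^esub> (b'::int) \<star> c'" using Phi_decomp[OF y] by blast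
  define Aa where "Aa = gA [^]\<^bsub>Gbar\<^esub> a"
  define Ba where "Ba = gB [^]\<^bsub>Gbar\<^esub> b"
  define Aa' where "Aa' = gA [^]\<^bsub>Gbar\<^esub> a'"
  define Ba' where "Ba' = gB [^]\<^bsub>Gbar\<^esub> b'"
  have G: "Aa \<in> G" "Ba \<in> G" "Aa' \<in> G" "Ba' \<in> G" unfolding Aa_def Ba_def Aa'_def Ba'_def
    using gA_carrier gB_carrier by simp_all
  have cG: "c \<in> G" "c' \<in> G" using L2G[OF c] L2G[OF c'] by simp_all
  define h' where "h' = Aa' \<star> Ba'"
  have h'G: "h' \<in> G" unfolding h'_def using G by simp
  define Xc where "Xc = gi Ba' \<star> gcomm (gi Ba) (gi Aa') \<star> gi (gi Ba')"
  define Yc where "Yc = gi h' \<star> c \<star> gi (gi h')"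
  have e: "x \<star> y = gA [^]\<^bsub>Gbar\<^esub> (a + a') \<star> gB [^]\<^bsub>Gbar\<^esub> (b + b') \<star> (Xc \<star> Yc \<star> c')"
    unfolding xe ye Xc_def Yc_def h'_def Aa_def[symmetric] Ba_def[symmetric] Aa'_def[symmetric] Ba'_def[symmetric]
      GB.int_pow_mult[OF gA_carrier] GB.int_pow_mult[OF gB_carrier]
    using G cG by (simp add: gcomm_def gs)
  have cm: "gcomm (gi Ba) (gi Aa') \<in> L2" using comm12 G by simp
  have XL: "Xc \<in> L2" unfolding Xc_def using L2_conj[OF GB.inv_closed[OF G(4)] cm] .
  have YL: "Yc \<in> L2" unfolding Yc_def using L2_conj[OF GB.inv_closed[OF h'G] c] .
  have "psib (x \<star> y) = \<psi> (Xc \<star> Yc \<star> c')" unfolding e using psib_eq L2_mult[OF L2_mult[OF XL YL] c'] by simp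
  also have "\<dots> = \<psi> Xc + \<psi> Yc + \<psi> c'" using psi_mult[OF L2_mult[OF XL YL] c'] psi_mult[OF XL YL] by simp
  finally have pxy: "psib (x \<star> y) = \<psi> Xc + \<psi> Yc + \<psi> c'" .
  have px: "psib x = \<psi> c" unfolding xe using psib_eq[OF c] .
  have py: "psib y = \<psi> c'" unfolding ye using psib_eq[OF c'] .
  have gAa': "gi Aa' = gA [^]\<^bsub>Gbar\<^esub> (- a')" unfolding Aa'_def using GB.int_pow_neg[OF gA_carrier] by simp
  have vcm: "vz (\<psi> (gcomm (gi Ba) (gi Aa')))" unfolding gAa' using vz_pA G a' by simp
  have "\<psi> Xc = \<psi> (gcomm (gi Ba) (gi Aa')) - sc (p3 (\<psi> (gcomm (gi Ba) (gi Aa')))) (F (gi Ba'))"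
    unfolding Xc_def using conj_psi[OF GB.inv_closed[OF G(4)] cm] .
  then have vX: "vz (\<psi> Xc)" using vcm unfolding vz_def by simp
  have Fh: "F (gi h') = - (a', b', 0)" unfolding h'_def Aa'_def Ba'_def
    using F_inv F_AB[OF L2_one, of a' b'] gA_carrier gB_carrier by simp
  have "\<psi> Yc = \<psi> c - sc (p3 (\<psi> c)) (F (gi h'))" unfolding Yc_def using conj_psi[OF GB.inv_closed[OF h'G] c] .
  then have vY: "vz (\<psi> Yc - \<psi> c)" unfolding Fh vz_def using a' b' Np_dvdN by simp
  have "psib (x \<star> y) - psib x - psib y = \<psi> Xc + (\<psi> Yc - \<psi> c)" unfolding pxy px py by simp
  then show ?thesis using vz_add[OF vX vY] by simp
qed

lemma psib_conj: assumes g: "g \<in> G" and d: "d \<in> Phi"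
  shows "vz (psib (g \<star> d \<star> gi g) - ((- (fst (\<phi>1 g) * \<phi>2 d), - (snd (\<phi>1 g) * \<phi>2 d), 0) + psib d))"
proof -
  obtain a b c where a: "int N dvd a" and b: "int N dvd b" and c: "c \<in> L2"
    and de: "d = gA [^]\<^bsub>Gbar\<^esub> (a::int) \<star> gB [^]\<^bsub>Gbar\<^esub> (b::int) \<star> c" using Phi_decomp[OF d] by blast
  define h where "h = gA [^]\<^bsub>Gbar\<^esub> a \<star> gB [^]\<^bsub>Gbar\<^esub> b"
  have hG: "h \<in> G" unfolding h_def using gA_carrier gB_carrier by simp
  have dG: "d \<in> G" using Phi_G[OF d] .
  have cG: "c \<in> G" using L2G[OF c] .
  have dh: "d = h \<star> c" unfolding de h_def ..
  have e1: "g \<star> d \<star> gi g = gcomm g d \<star> d" using I4[OF g dG] .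
  have m: "gcomm g d \<in> L2" using comm12[OF g dG] .
  have hom: "vz (psib (gcomm g d \<star> d) - psib (gcomm g d) - psib d)" using psib_hom[OF L2_Phi[OF m] d] .
  have e2: "gcomm g d = gcomm g h \<star> (h \<star> gcomm g c \<star> gi h)" unfolding dh using I1[OF g hG cG] .
  have m1: "gcomm g h \<in> L2" using comm12[OF g hG] .
  have m2: "gcomm g c \<in> L2" using comm12[OF g cG] .
  have pgc: "\<psi> (gcomm g c) = - sc (p3 (\<psi> c)) (F g)"
    using I3[OF cG g] psi_inv[OF comm12[OF cG g]] comm_psi[OF c g] by simp
  have p3gc: "p3 (\<psi> (gcomm g c)) = 0" unfolding pgc using F3[OF g] by simp
  have "\<psi> (gcomm g d) = \<psi> (gcomm g h) + (\<psi> (gcomm g c) - sc (p3 (\<psi> (gcomm g c))) (F h))"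
    unfolding e2 psi_mult[OF m1 L2_conj[OF hG m2]] conj_psi[OF hG m2] ..
  then have pgd: "\<psi> (gcomm g d) = \<psi> (gcomm g h) - sc (p3 (\<psi> c)) (F g)"
    using F3[OF g] unfolding pgc by (simp add: sc_def zero_prod_def)
  have vh: "vz (\<psi> (gcomm g h))" unfolding h_def using vz_pAB[OF g a b] .
  have pd: "psib d = \<psi> c" unfolding de using psib_eq[OF c] .
  have f1: "int N dvd fst (\<phi>1 g) - p1 (F g)" and f2: "int N dvd snd (\<phi>1 g) - p2 (F g)" using phi1_F[OF g] by auto
  have f1': "Np dvd fst (\<phi>1 g) - p1 (F g)" using Np_dvdN[OF f1] .
  have f2': "Np dvd snd (\<phi>1 g) - p2 (F g)" using Np_dvdN[OF f2] .
  have pdh: "Np dvd \<phi>2 (h \<star> c) - \<phi>2 h - \<phi>2 c"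
    using phi2_mult[OF subgroup.m_closed[OF Phi_sub] L2_Phi[OF c]] unfolding h_def
    using Phi_iff FA_pow FB_pow gA_carrier gB_carrier a b by simp
  have ph: "Np dvd \<phi>2 h" unfolding h_def using phi2_h[OF a b] .
  have pc: "Np dvd \<phi>2 c - p3 (\<psi> c)" using phi2_psi[OF c] .
  have q: "Np dvd \<phi>2 d - p3 (\<psi> c)" unfolding dh using dvd_add[OF dvd_add[OF pdh ph] pc] by simp
  have key: "Np dvd x * y - x' * y'" if "Np dvd x - x'" "Np dvd y - y'" for x y x' y' :: int
  proof -
    have "x * y - x' * y' = x * (y - y') + (x - x') * y'" by (simp add: algebra_simps)
    then show ?thesis using that by simp
  qed
  have k1: "Np dvd fst (\<phi>1 g) * \<phi>2 d - p1 (F g) * p3 (\<psi> c)" using key[OF f1' q] .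
  have k2: "Np dvd snd (\<phi>1 g) * \<phi>2 d - p2 (F g) * p3 (\<psi> c)" using key[OF f2' q] .
  have eq: "psib (g \<star> d \<star> gi g) - ((- (fst (\<phi>1 g) * \<phi>2 d), - (snd (\<phi>1 g) * \<phi>2 d), 0) + psib d)
      = (psib (gcomm g d \<star> d) - psib (gcomm g d) - psib d) + \<psi> (gcomm g h)
        + (fst (\<phi>1 g) * \<phi>2 d - p1 (F g) * p3 (\<psi> c), snd (\<phi>1 g) * \<phi>2 d - p2 (F g) * p3 (\<psi> c), 0)"
    unfolding e1 psib_L2[OF m] pgd pd using F3[OF g] by (simp add: sc_def prod_eq_iff algebra_simps)
  have vk: "vz (fst (\<phi>1 g) * \<phi>2 d - p1 (F g) * p3 (\<psi> c), snd (\<phi>1 g) * \<phi>2 d - p2 (F g) * p3 (\<psi> c), 0)"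
    unfolding vz_def using k1 k2 by simp
  show ?thesis unfolding eq by (rule vz_add[OF vz_add[OF hom vh] vk])
qed

lemma psib_explicit:
  "psib (gA [^]\<^bsub>Gbar\<^esub> (i::int) \<star> gB [^]\<^bsub>Gbar\<^esub> (j::int) \<star> gC [^]\<^bsub>Gbar\<^esub> (k::int)
          \<star> gB [^]\<^bsub>Gbar\<^esub> (-j) \<star> gA [^]\<^bsub>Gbar\<^esub> (-i)) = (- i * k, - j * k, k)"
proof -
  define g where "g = gA [^]\<^bsub>Gbar\<^esub> i \<star> gB [^]\<^bsub>Gbar\<^esub> j"
  have gG: "g \<in> G" unfolding g_def using gA_carrier gB_carrier by simp
  have Ck: "gC [^]\<^bsub>Gbar\<^esub> k \<in> L2" using GB.subgroup_int_pow_closed[OF L2sub gC_L2] .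
  have e: "gA [^]\<^bsub>Gbar\<^esub> i \<star> gB [^]\<^bsub>Gbar\<^esub> j \<star> gC [^]\<^bsub>Gbar\<^esub> k \<star> gB [^]\<^bsub>Gbar\<^esub> (-j) \<star> gA [^]\<^bsub>Gbar\<^esub> (-i)
      = g \<star> gC [^]\<^bsub>Gbar\<^esub> k \<star> gi g"
    unfolding g_def using gA_carrier gB_carrier gC_G by (simp add: GB.int_pow_neg gs)
  have Fg: "F g = (i, j, 0)" unfolding g_def using F_AB[OF L2_one, of i j] gA_carrier gB_carrier by simp
  show ?thesis unfolding e psib_L2[OF L2_conj[OF gG Ck]] conj_psi[OF gG Ck] psi_pow[OF gC_L2] psi_C Fg
    by (simp add: sc_def)
qed

end

lemma P7_main:
  assumes "P7 N \<psi> \<phi>1 \<phi>2"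
  shows "\<exists>\<psi>b :: mat2 set \<Rightarrow> int \<times> int \<times> int.
           (\<forall>x\<in>{x \<in> carrier Gbar. modeq2 (int N) (\<phi>1 x) (0,0)}. \<forall>y\<in>{x \<in> carrier Gbar. modeq2 (int N) (\<phi>1 x) (0,0)}.
               modeq3 (Nprime N) (\<psi>b (x \<otimes>\<^bsub>Gbar\<^esub> y)) (\<psi>b x + \<psi>b y))
         \<and> (\<forall>x\<in>lcs 2. modeq3 (Nprime N) (\<psi>b x) (\<psi> x))
         \<and> modeq3 (Nprime N) (\<psi>b (gA [^]\<^bsub>Gbar\<^esub> N)) 0
         \<and> modeq3 (Nprime N) (\<psi>b (gB [^]\<^bsub>Gbar\<^esub> N)) 0
         \<and> (\<forall>\<gamma>\<in>carrier Gbar. \<forall>\<delta>\<in>{x \<in> carrier Gbar. modeq2 (int N) (\<phi>1 x) (0,0)}.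
              modeq3 (Nprime N) (\<psi>b (\<gamma> \<otimes>\<^bsub>Gbar\<^esub> \<delta> \<otimes>\<^bsub>Gbar\<^esub> inv\<^bsub>Gbar\<^esub> \<gamma>))
                ((- (fst (\<phi>1 \<gamma>) * \<phi>2 \<delta>), - (snd (\<phi>1 \<gamma>) * \<phi>2 \<delta>), 0) + \<psi>b \<delta>))
         \<and> (\<forall>(i::int) (j::int) (k::int).
              modeq3 (Nprime N) (\<psi>b (gA [^]\<^bsub>Gbar\<^esub> i \<otimes>\<^bsub>Gbar\<^esub> gB [^]\<^bsub>Gbar\<^esub> j \<otimes>\<^bsub>Gbar\<^esub> gC [^]\<^bsub>Gbar\<^esub> k
                    \<otimes>\<^bsub>Gbar\<^esub> gB [^]\<^bsub>Gbar\<^esub> (-j) \<otimes>\<^bsub>Gbar\<^esub> gA [^]\<^bsub>Gbar\<^esub> (-i)))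
                (- i * k, - j * k, k))"
proof -
  interpret P: P7 N \<psi> \<phi>1 \<phi>2 by (rule assms)
  have md: "modeq3 (Nprime N) u v \<longleftrightarrow> P.vz (u - v)" for u v
    unfolding modeq3_dvd P.vz_def P.Np_def by simp
  have PhiE: "{x \<in> carrier Gbar. modeq2 (int N) (\<phi>1 x) (0,0)} = P.Phi" unfolding P.Phi_def ..
  show ?thesis
  proof (intro exI[of _ P.psib] conjI ballI allI)
    fix x y assume "x \<in> {x \<in> carrier Gbar. modeq2 (int N) (\<phi>1 x) (0,0)}" "y \<in> {x \<in> carrier Gbar. modeq2 (int N) (\<phi>1 x) (0,0)}"
    then have x: "x \<in> P.Phi" and y: "y \<in> P.Phi" unfolding PhiE .
    show "modeq3 (Nprime N) (P.psib (x \<star> y)) (P.psib x + P.psib y)"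
      unfolding md diff_diff_eq[symmetric] using P.psib_hom[OF x y] .
  next
    fix x assume "x \<in> lcs 2"
    then have x: "x \<in> lcs0 1" by (simp add: lcs_def)
    show "modeq3 (Nprime N) (P.psib x) (\<psi> x)" unfolding md P.psib_L2[OF x] using P.vz_zero by simp
  next
    have "gA [^]\<^bsub>Gbar\<^esub> N = gA [^]\<^bsub>Gbar\<^esub> (int N) \<star> gB [^]\<^bsub>Gbar\<^esub> (0::int) \<star> \<one>\<^bsub>Gbar\<^esub>"
      using gA_carrier gB_carrier by (simp add: int_pow_int)
    then have "P.psib (gA [^]\<^bsub>Gbar\<^esub> N) = P.psib (gA [^]\<^bsub>Gbar\<^esub> (int N) \<star> gB [^]\<^bsub>Gbar\<^esub> (0::int) \<star> \<one>\<^bsub>Gbar\<^esub>)" by (rule arg_cong)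
    also have "\<dots> = 0" using P.psib_eq[OF P.L2_one, of "int N" 0] P.psi_one by (simp only:)
    finally have "P.psib (gA [^]\<^bsub>Gbar\<^esub> N) = 0" .
    then show "modeq3 (Nprime N) (P.psib (gA [^]\<^bsub>Gbar\<^esub> N)) 0" unfolding md using P.vz_zero by simp
  next
    have "gB [^]\<^bsub>Gbar\<^esub> N = gA [^]\<^bsub>Gbar\<^esub> (0::int) \<star> gB [^]\<^bsub>Gbar\<^esub> (int N) \<star> \<one>\<^bsub>Gbar\<^esub>"
      using gA_carrier gB_carrier by (simp add: int_pow_int)
    then have "P.psib (gB [^]\<^bsub>Gbar\<^esub> N) = P.psib (gA [^]\<^bsub>Gbar\<^esub> (0::int) \<star> gB [^]\<^bsub>Gbar\<^esub> (int N) \<star> \<one>\<^bsub>Gbar\<^esub>)" by (rule arg_cong)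
    also have "\<dots> = 0" using P.psib_eq[OF P.L2_one, of 0 "int N"] P.psi_one by (simp only:)
    finally have "P.psib (gB [^]\<^bsub>Gbar\<^esub> N) = 0" .
    then show "modeq3 (Nprime N) (P.psib (gB [^]\<^bsub>Gbar\<^esub> N)) 0" unfolding md using P.vz_zero by simp
  next
    fix g d assume g: "g \<in> carrier Gbar" and d0: "d \<in> {x \<in> carrier Gbar. modeq2 (int N) (\<phi>1 x) (0,0)}"
    from d0 have d: "d \<in> P.Phi" unfolding PhiE .
    show "modeq3 (Nprime N) (P.psib (g \<star> d \<star> gi g))
                ((- (fst (\<phi>1 g) * \<phi>2 d), - (snd (\<phi>1 g) * \<phi>2 d), 0) + P.psib d)"
      unfolding md using P.psib_conj[OF g d] .
  next
    fix i j k :: int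
    show "modeq3 (Nprime N) (P.psib (gA [^]\<^bsub>Gbar\<^esub> i \<star> gB [^]\<^bsub>Gbar\<^esub> j \<star> gC [^]\<^bsub>Gbar\<^esub> k
                    \<star> gB [^]\<^bsub>Gbar\<^esub> (-j) \<star> gA [^]\<^bsub>Gbar\<^esub> (-i))) (- i * k, - j * k, k)"
      unfolding md P.psib_explicit using P.vz_zero by simp
  qed
qed

theorem proposition7:
  fixes N :: nat
    and \<psi> :: "mat2 set \<Rightarrow> int \<times> int \<times> int"
    and \<phi>1 :: "mat2 set \<Rightarrow> int \<times> int"
    and \<phi>2 :: "mat2 set \<Rightarrow> int"
  defines "Np \<equiv> Nprime N"
  defines "PhiN \<equiv> {x \<in> carrier Gbar. modeq2 (int N) (\<phi>1 x) (0,0)}"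
  assumes N: "N \<ge> 1"
    and psi_hom: "\<forall>x\<in>lcs 2. \<forall>y\<in>lcs 2. \<psi> (x \<otimes>\<^bsub>Gbar\<^esub> y) = \<psi> x + \<psi> y"
    and psi_ker: "{x \<in> lcs 2. \<psi> x = 0} = lcs 4"
    and psi_C: "\<psi> gC = (0,0,1)"
    and psi_CA: "\<psi> (gcomm gC gA) = (1,0,0)"
    and psi_CB: "\<psi> (gcomm gC gB) = (0,1,0)"
    and phi1_hom: "\<forall>x\<in>carrier Gbar. \<forall>y\<in>carrier Gbar.
                     modeq2 (int N) (\<phi>1 (x \<otimes>\<^bsub>Gbar\<^esub> y)) (\<phi>1 x + \<phi>1 y)"
    and phi1_A: "modeq2 (int N) (\<phi>1 gA) (1,0)"
    and phi1_B: "modeq2 (int N) (\<phi>1 gB) (0,1)"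
    and phi2_hom: "\<forall>x\<in>PhiN. \<forall>y\<in>PhiN. (\<phi>2 (x \<otimes>\<^bsub>Gbar\<^esub> y)) mod Np = (\<phi>2 x + \<phi>2 y) mod Np"
    and phi2_AN: "\<phi>2 (gA [^]\<^bsub>Gbar\<^esub> N) mod Np = 0"
    and phi2_BN: "\<phi>2 (gB [^]\<^bsub>Gbar\<^esub> N) mod Np = 0"
    and phi2_C: "\<forall>(i::int) (j::int). \<phi>2 (gA [^]\<^bsub>Gbar\<^esub> i \<otimes>\<^bsub>Gbar\<^esub> gB [^]\<^bsub>Gbar\<^esub> j \<otimes>\<^bsub>Gbar\<^esub> gC
                    \<otimes>\<^bsub>Gbar\<^esub> gB [^]\<^bsub>Gbar\<^esub> (-j) \<otimes>\<^bsub>Gbar\<^esub> gA [^]\<^bsub>Gbar\<^esub> (-i)) mod Np = 1 mod Np"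
  shows "\<exists>\<psi>b :: mat2 set \<Rightarrow> int \<times> int \<times> int.
           (\<forall>x\<in>PhiN. \<forall>y\<in>PhiN. modeq3 Np (\<psi>b (x \<otimes>\<^bsub>Gbar\<^esub> y)) (\<psi>b x + \<psi>b y))
         \<and> (\<forall>x\<in>lcs 2. modeq3 Np (\<psi>b x) (\<psi> x))
         \<and> modeq3 Np (\<psi>b (gA [^]\<^bsub>Gbar\<^esub> N)) 0
         \<and> modeq3 Np (\<psi>b (gB [^]\<^bsub>Gbar\<^esub> N)) 0
         \<and> (\<forall>\<gamma>\<in>carrier Gbar. \<forall>\<delta>\<in>PhiN.
              modeq3 Np (\<psi>b (\<gamma> \<otimes>\<^bsub>Gbar\<^esub> \<delta> \<otimes>\<^bsub>Gbar\<^esub> inv\<^bsub>Gbar\<^esub> \<gamma>))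
                ((- (fst (\<phi>1 \<gamma>) * \<phi>2 \<delta>), - (snd (\<phi>1 \<gamma>) * \<phi>2 \<delta>), 0) + \<psi>b \<delta>))
         \<and> (\<forall>(i::int) (j::int) (k::int).
              modeq3 Np (\<psi>b (gA [^]\<^bsub>Gbar\<^esub> i \<otimes>\<^bsub>Gbar\<^esub> gB [^]\<^bsub>Gbar\<^esub> j \<otimes>\<^bsub>Gbar\<^esub> gC [^]\<^bsub>Gbar\<^esub> k
                    \<otimes>\<^bsub>Gbar\<^esub> gB [^]\<^bsub>Gbar\<^esub> (-j) \<otimes>\<^bsub>Gbar\<^esub> gA [^]\<^bsub>Gbar\<^esub> (-i)))
                (- i * k, - j * k, k))"
proof -
  have P: "P7 N \<psi> \<phi>1 \<phi>2"
    unfolding P7_def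
    using N psi_hom psi_ker psi_C psi_CA psi_CB phi1_hom phi1_A phi1_B
      phi2_hom[unfolded PhiN_def Np_def] phi2_AN[unfolded Np_def] phi2_BN[unfolded Np_def]
      phi2_C[unfolded Np_def]
    by (intro conjI)
  show ?thesis unfolding Np_def PhiN_def using P7_main[OF P] .
qed

end
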